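(* Let $(C,\Delta_C)$ be a finite-dimensional left ${\cal H}_R$-comodule. If $\dim C=1$, then $C$ is trivial, i.e. $\Delta_C(x)=1\otimes x$ for all $x\in C$. If $\dim C=n+1$ with $n\ge1$, then there exists a family $(p_{i,j})_{1\le i\le j\le n}$ of $\frac{n(n+1)}{2}$ primitive elements of ${\cal H}_R$ such that $C$ is isomorphic, as a comodule, to $C_{(p_{i,j})}$.
   Context: A rooted tree is a finite connected and simply connected graph with a distinguished vertex (the root), edges oriented away from the root; its weight is its number of vertices. ${\cal H}_R$ is the commutative polynomial algebra over $\mathbb{Q}$ on the isomorphism classes of rooted trees; monomials are forests ($1$ is the empty forest). An admissible cut $C$ of a tree $t$ is a nonempty set of edges such that every path from the root to a vertex contains at most one edge of $C$; removing them gives a forest in which $R^C(t)$ is the tree containing the root and $P^C(t)$ the product of the others. ${\cal H}_R$ is a Hopf algebra with coproduct the algebra morphism $\Delta$ with $\Delta(t)=1\otimes t+t\otimes1+\sum_C P^C(t)\otimes R^C(t)$ on trees, counit $\varepsilon(1)=1$, $\varepsilon(t)=0$; $x$ is primitive iff $\Delta(x)=x\otimes1+1\otimes x$. For forests $M,N$: $M\top N=0$ if $N=1$, otherwise $M\top N=\frac{1}{weight(N)}\sum_v N_v$, $v$ over vertices of $N$, $N_v$ obtained from $N$ by attaching every tree of $M$ to $v$; extended bilinearly; $p_k\top\cdots\top p_1:=(p_k\top\cdots\top p_2)\top p_1$. For $1\le i\le j$, a decomposition of $\{i,\dots,j\}$ is a partition into intervals $I_{i_1,j_1}\cdots I_{i_k,j_k}$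 with $i=i_1\le j_1<i_2\le\cdots<i_k\le j_k=j$, $i_{r+1}=j_r+1$; ${\cal D}_{i,j}$ is the set of these. For a family $(p_{i,j})_{1\le i\le j\le n}$ of primitive elements, $C_{(p_{i,j})}$ is the vector space with basis $e_0,\dots,e_n$ and comodule map $\Delta(e_0)=1\otimes e_0$, $\Delta(e_i)=\sum_{j=0}^{i-1}\big(\sum_{I_{i_1,j_1}\cdots I_{i_k,j_k}\in{\cal D}_{j+1,i}}p_{i_k,j_k}\top\cdots\top p_{i_1,j_1}\big)\otimes e_j+1\otimes e_i$ (this is a left ${\cal H}_R$-comodule). *)

theory Defs
  imports Complex_Main "HOL-Library.Multiset"
begin

text \<open>An isomorphism class of rooted trees is a root together with the multiset of
 (isomorphism classes of) the subtrees hanging from the children of the root.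
 A forest (a monomial of H_R) is a multiset of trees; the empty forest is 1.\<close>

datatype rtree = Node "rtree multiset"

type_synonym forest = "rtree multiset"

primrec weight :: "rtree \<Rightarrow> nat" where
  "weight (Node ts) = Suc (sum_mset (image_mset weight ts))"

definition fweight :: "forest \<Rightarrow> nat" where
  "fweight F = sum_mset (image_mset weight F)"

definition pairprod :: "(forest \<times> forest) multiset \<Rightarrow> (forest \<times> forest) multiset
    \<Rightarrow> (forest \<times> forest) multiset" where
  "pairprod A B = sum_mset (image_mset (\<lambda>(p1,r1). image_mset (\<lambda>(p2,r2). (p1 + p2, r1 + r2)) B) A)"

definition comb :: "(forest \<times> forest) multiset multiset \<Rightarrow> (forest \<times> forest) multiset" where
  "comb X = fold_mset pairprod {#({#}, {#})#} X"

text \<open>cuts t enumerates (with multiplicity one per edge set) all sets C of edges of t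
 such that every path from the root contains at most one edge of C, INCLUDING the
 empty set, each recorded as the pair (P^C(t), R^C(t)).  Such a C is determined by
 choosing, independently for every child c of the root, either to cut the edge to c
 (then nothing below c is cut, and the subtree at c becomes a tree of P^C) or not
 to cut it and to choose recursively such an edge set in the subtree at c.\<close>
primrec cuts :: "rtree \<Rightarrow> (forest \<times> rtree) multiset" where
  "cuts (Node ts) =
     image_mset (\<lambda>(P, R). (P, Node R))
       (comb (image_mset (\<lambda>t. {#({#t#}, {#})#} + image_mset (\<lambda>(P, R). (P, {#R#})) (cuts t)) ts))"

text \<open>Admissible cuts = nonempty such edge sets (the empty set gives (1, t) exactly once).\<close>
definition adm_cuts :: "rtree \<Rightarrow> (forest \<times> rtree) multiset" where
  "adm_cuts t = cuts t - {#({#}, t)#}"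

text \<open>Delta(t) = 1 (x) t + t (x) 1 + sum_C P^C(t) (x) R^C(t), as a multiset of pairs of
 forests (basis elements of H_R (x) H_R).\<close>
definition cop_tree :: "rtree \<Rightarrow> (forest \<times> forest) multiset" where
  "cop_tree t = {#({#}, {#t#}), ({#t#}, {#})#} + image_mset (\<lambda>(P, R). (P, {#R#})) (adm_cuts t)"

text \<open>Delta is an algebra morphism: Delta of a forest is the product of the Delta's of its trees.\<close>
definition cop_forest :: "forest \<Rightarrow> (forest \<times> forest) multiset" where
  "cop_forest F = comb (image_mset cop_tree F)"

definition hr_elem :: "(forest \<Rightarrow> rat) \<Rightarrow> bool" where
  "hr_elem x \<longleftrightarrow> finite {F. x F \<noteq> 0}"

definition hr_cop :: "(forest \<Rightarrow> rat) \<Rightarrow> (forest \<times> forest \<Rightarrow> rat)" where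
  "hr_cop x = (\<lambda>(A, B). \<Sum>F\<in>{F. x F \<noteq> 0}. x F * of_nat (count (cop_forest F) (A, B)))"

definition primitive :: "(forest \<Rightarrow> rat) \<Rightarrow> bool" where
  "primitive x \<longleftrightarrow> hr_elem x \<and>
     hr_cop x = (\<lambda>(A, B). (if B = {#} then x A else 0) + (if A = {#} then x B else 0))"

text \<open>Grafting all trees of the forest M on each vertex of t (one result per vertex).\<close>
primrec graft_tree :: "forest \<Rightarrow> rtree \<Rightarrow> rtree multiset" where
  "graft_tree M (Node ts) =
     {#Node (ts + M)#} +
     sum_mset (image_mset (\<lambda>(t, G). image_mset (\<lambda>t'. Node (ts - {#t#} + {#t'#})) G)
                (image_mset (\<lambda>t. (t, graft_tree M t)) ts))"

text \<open>The multiset of the forests N_v, v ranging over the vertices of N.\<close>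
definition graft_forest :: "forest \<Rightarrow> forest \<Rightarrow> forest multiset" where
  "graft_forest M N =
     sum_mset (image_mset (\<lambda>t. image_mset (\<lambda>t'. N - {#t#} + {#t'#}) (graft_tree M t)) N)"

definition top :: "(forest \<Rightarrow> rat) \<Rightarrow> (forest \<Rightarrow> rat) \<Rightarrow> (forest \<Rightarrow> rat)" where
  "top x y = (\<lambda>F. \<Sum>M\<in>{M. x M \<noteq> 0}. \<Sum>N\<in>{N. y N \<noteq> 0}.
      x M * y N * (if N = {#} then 0
                   else of_nat (count (graft_forest M N) F) / of_nat (fweight N)))"

text \<open>A decomposition of {a..b} as the list of its intervals [(i1,j1),...,(ik,jk)].\<close>
definition decomps :: "nat \<Rightarrow> nat \<Rightarrow> (nat \<times> nat) list set" where
  "decomps a b = {ds. ds \<noteq> [] \<and> fst (hd ds) = a \<and> snd (last ds) = b \<and>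
      (\<forall>r < length ds. fst (ds ! r) \<le> snd (ds ! r)) \<and>
      (\<forall>r. Suc r < length ds \<longrightarrow> fst (ds ! Suc r) = Suc (snd (ds ! r)))}"

text \<open>p_{ik,jk} top ... top p_{i1,j1}, bracketed to the left.\<close>
definition top_word :: "(nat \<Rightarrow> nat \<Rightarrow> forest \<Rightarrow> rat) \<Rightarrow> (nat \<times> nat) list \<Rightarrow> (forest \<Rightarrow> rat)" where
  "top_word p ds = (case rev ds of [] \<Rightarrow> (\<lambda>_. 0)
      | (a, b) # rest \<Rightarrow> foldl (\<lambda>acc (c, d). top acc (p c d)) (p a b) rest)"

definition Cp_coeff :: "(nat \<Rightarrow> nat \<Rightarrow> forest \<Rightarrow> rat) \<Rightarrow> nat \<Rightarrow> nat \<Rightarrow> (forest \<Rightarrow> rat)" where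
  "Cp_coeff p i j = (\<lambda>F. \<Sum>ds\<in>decomps (Suc j) i. top_word p ds F)"

text \<open>A Q-vector space 'v (scalar multiplication sc) with a linear map
 delta : 'v => H_R (x) 'v, where H_R (x) 'v is represented as finitely supported
 functions forest => 'v (H_R has the forests as basis).\<close>
definition left_comodule :: "(rat \<Rightarrow> 'v::ab_group_add \<Rightarrow> 'v) \<Rightarrow> ('v \<Rightarrow> forest \<Rightarrow> 'v) \<Rightarrow> bool" where
  "left_comodule sc delta \<longleftrightarrow>
     vector_space sc \<and>
     (\<forall>v. finite {F. delta v F \<noteq> 0}) \<and>
     (\<forall>v w. delta (v + w) = (\<lambda>F. delta v F + delta w F)) \<and>
     (\<forall>c v. delta (sc c v) = (\<lambda>F. sc c (delta v F))) \<and>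
     \<comment> \<open>coassociativity: (Delta_H (x) id) o delta = (id (x) delta) o delta\<close>
     (\<forall>v A B. (\<Sum>F\<in>{F. delta v F \<noteq> 0}. sc (of_nat (count (cop_forest F) (A, B))) (delta v F))
               = delta (delta v A) B) \<and>
     \<comment> \<open>counit: (epsilon (x) id) o delta = id\<close>
     (\<forall>v. delta v {#} = v)"

end

theory Submission
  imports Defs
begin


definition pp :: "forest \<times> forest \<Rightarrow> forest \<times> forest \<Rightarrow> forest \<times> forest" where
  "pp a b = (fst a + fst b, snd a + snd b)"

lemma pp_comm: "pp a b = pp b a" by (simp add: pp_def add.commute)
lemma pp_assoc: "pp (pp a b) c = pp a (pp b c)" by (simp add: pp_def add.assoc)
lemma pp_unit[simp]: "pp ({#},{#}) a = a" "pp a ({#},{#}) = a" by (simp_all add: pp_def)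

lemma pairprod_empty[simp]: "pairprod {#} B = {#}" by (simp add: pairprod_def)
lemma pairprod_add_mset: "pairprod (add_mset a A) B = image_mset (pp a) B + pairprod A B"
proof (cases a)
  case (Pair x y)
  have "pp (x, y) = (\<lambda>(p2, r2). (x + p2, y + r2))" by (auto simp: fun_eq_iff pp_def)
  then show ?thesis using Pair by (simp add: pairprod_def)
qed
lemma pairprod_plus1: "pairprod (A1 + A2) B = pairprod A1 B + pairprod A2 B"
  by (simp add: pairprod_def)
lemma pairprod_empty2[simp]: "pairprod A {#} = {#}"
  by (induction A) (simp_all add: pairprod_add_mset)
lemma pairprod_add_mset2: "pairprod A (add_mset b B) = image_mset (\<lambda>a. pp a b) A + pairprod A B"
  by (induction A) (simp_all add: pairprod_add_mset)
lemma pairprod_comm: "pairprod A B = pairprod B A"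
proof (induction A)
  case empty then show ?case by simp
next
  case (add a A)
  have "pp a = (\<lambda>b. pp b a)" by (rule ext, rule pp_comm)
  then show ?case by (simp add: pairprod_add_mset pairprod_add_mset2 add)
qed
lemma pairprod_plus2: "pairprod A (B1 + B2) = pairprod A B1 + pairprod A B2"
  by (metis pairprod_comm pairprod_plus1)
lemma pairprod_single[simp]: "pairprod {#a#} {#b#} = {#pp a b#}"
  by (simp add: pairprod_add_mset)
lemma pairprod_image_left: "pairprod (image_mset (pp a) B) C = image_mset (pp a) (pairprod B C)"
proof -
  have e: "\<And>x. pp (pp a x) = (\<lambda>c. pp a (pp x c))" by (rule ext, rule pp_assoc)
  show ?thesis by (induction B) (simp_all add: pairprod_add_mset e multiset.map_comp comp_def)
qed
lemma pairprod_assoc: "pairprod (pairprod A B) C = pairprod A (pairprod B C)"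
  by (induction A) (simp_all add: pairprod_add_mset pairprod_plus1 pairprod_image_left)
lemma pp_unit_fun[simp]: "pp ({#},{#}) = (\<lambda>a. a)" by (rule ext) simp
lemma pairprod_unit[simp]: "pairprod {#({#},{#})#} A = A" "pairprod A {#({#},{#})#} = A"
  by (simp_all add: pairprod_add_mset pairprod_add_mset2)

lemma cfc_pairprod: "comp_fun_commute pairprod"
proof
  fix y x :: "(forest \<times> forest) multiset"
  show "pairprod y \<circ> pairprod x = pairprod x \<circ> pairprod y"
    by (rule ext) (metis comp_apply pairprod_assoc pairprod_comm)
qed

lemma comb_empty[simp]: "comb {#} = {#({#},{#})#}" by (simp add: comb_def)
lemma comb_add_mset[simp]: "comb (add_mset x X) = pairprod x (comb X)"
  by (simp add: comb_def comp_fun_commute.fold_mset_add_mset[OF cfc_pairprod])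
lemma comb_plus: "comb (X + Y) = pairprod (comb X) (comb Y)"
  by (induction X) (simp_all add: pairprod_assoc)

lemma cop_forest_empty[simp]: "cop_forest {#} = {#({#},{#})#}" by (simp add: cop_forest_def)
lemma cop_forest_plus: "cop_forest (A + B) = pairprod (cop_forest A) (cop_forest B)"
  by (simp add: cop_forest_def comb_plus)
lemma cop_forest_add_mset: "cop_forest (add_mset t A) = pairprod (cop_tree t) (cop_forest A)"
  by (simp add: cop_forest_def)
lemma cop_forest_single[simp]: "cop_forest {#t#} = cop_tree t"
  by (simp add: cop_forest_def)

lemma pairprod_mem: "a \<in># A \<Longrightarrow> b \<in># B \<Longrightarrow> pp a b \<in># pairprod A B"
proof (induction A)
  case empty then show ?case by simp
next
  case (add x A) then show ?case by (auto simp: pairprod_add_mset)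
qed

lemma pairprod_memE: "z \<in># pairprod A B \<Longrightarrow> \<exists>a b. a \<in># A \<and> b \<in># B \<and> z = pp a b"
proof (induction A)
  case empty then show ?case by simp
next
  case (add x A)
  from add.prems have "z \<in># image_mset (pp x) B \<or> z \<in># pairprod A B" by (simp add: pairprod_add_mset)
  then show ?case
  proof
    assume "z \<in># image_mset (pp x) B"
    then obtain b where "b \<in># B" "z = pp x b" by auto
    then show ?case by (intro exI[of _ x] exI[of _ b]) auto
  next
    assume "z \<in># pairprod A B"
    then obtain a b where "a \<in># A" "b \<in># B" "z = pp a b" using add.IH by blast
    then show ?case by (intro exI[of _ a] exI[of _ b]) auto
  qed
qed

definition choice :: "rtree \<Rightarrow> (forest \<times> forest) multiset" where
  "choice t = {#({#t#}, {#})#} + image_mset (\<lambda>(P, R). (P, {#R#})) (cuts t)"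

lemma cuts_Node: "cuts (Node ts) = image_mset (\<lambda>(P, R). (P, Node R)) (comb (image_mset choice ts))"
proof -
  have "(\<lambda>t. add_mset ({#t#}, {#}) {#(P, {#R#}). (P, R) \<in># cuts t#}) = choice"
    by (rule ext) (simp add: choice_def)
  then show ?thesis by simp
qed

lemma empty_in_cuts: "({#}, t) \<in># cuts t"
proof (induction t)
  case (Node ts)
  have "({#}, ts) \<in># comb (image_mset choice ts)" using Node
  proof (induction ts)
    case empty then show ?case by simp
  next
    case (add x ts)
    have "({#}, {#x#}) \<in># choice x" using add.prems by (force simp: choice_def)
    moreover have "({#}, ts) \<in># comb (image_mset choice ts)" using add by auto
    ultimately have "pp ({#}, {#x#}) ({#}, ts) \<in># comb (image_mset choice (add_mset x ts))"
      by (simp add: pairprod_mem)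
    then show ?case by (simp add: pp_def)
  qed
  then show ?case unfolding cuts_Node by force
qed

lemma cop_tree_choice: "cop_tree t = choice t"
proof -
  have "image_mset (\<lambda>(P, R). (P, {#R#})) (cuts t) =
        image_mset (\<lambda>(P, R). (P, {#R#})) (adm_cuts t + {#({#}, t)#})"
    using empty_in_cuts[of t] by (simp add: adm_cuts_def)
  then show ?thesis by (simp add: cop_tree_def choice_def)
qed

lemma cuts_Node_cop: "cuts (Node ts) = image_mset (\<lambda>(P, R). (P, Node R)) (cop_forest ts)"
proof -
  have "cop_tree = choice" by (rule ext) (rule cop_tree_choice)
  then have "image_mset choice ts = image_mset cop_tree ts" by simp
  then show ?thesis by (simp only: cuts_Node cop_forest_def)
qed

lemma cop_tree_cuts: "cop_tree t = {#({#t#}, {#})#} + image_mset (\<lambda>(P, R). (P, {#R#})) (cuts t)"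
  by (simp add: cop_tree_choice choice_def)


section \<open>Grading\<close>

lemma weight_pos: "weight t > 0" by (cases t) simp
lemma fweight_plus[simp]: "fweight (A + B) = fweight A + fweight B" by (simp add: fweight_def)
lemma fweight_empty[simp]: "fweight {#} = 0" by (simp add: fweight_def)
lemma fweight_add_mset[simp]: "fweight (add_mset t A) = weight t + fweight A" by (simp add: fweight_def)
lemma fweight_zero_iff: "fweight A = 0 \<longleftrightarrow> A = {#}"
  by (induction A) (auto simp: weight_pos)

definition graded :: "(forest \<times> forest) multiset \<Rightarrow> nat \<Rightarrow> bool" where
  "graded X n \<longleftrightarrow> (\<forall>z\<in>#X. fweight (fst z) + fweight (snd z) = n)"

lemma pairprod_graded: "graded X a \<Longrightarrow> graded Y b \<Longrightarrow> graded (pairprod X Y) (a + b)"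
  unfolding graded_def
proof
  fix z assume X: "\<forall>z\<in>#X. fweight (fst z) + fweight (snd z) = a"
    and Y: "\<forall>z\<in>#Y. fweight (fst z) + fweight (snd z) = b" and z: "z \<in># pairprod X Y"
  obtain x y where "x \<in># X" "y \<in># Y" "z = pp x y" using pairprod_memE[OF z] by blast
  with X Y show "fweight (fst z) + fweight (snd z) = a + b" by (auto simp: pp_def)
qed

lemma cop_forest_graded_aux:
  "(\<And>t. t \<in># N \<Longrightarrow> graded (cop_tree t) (weight t)) \<Longrightarrow> graded (cop_forest N) (fweight N)"
proof (induction N)
  case empty then show ?case by (simp add: graded_def)
next
  case (add t N)
  then show ?case using pairprod_graded[of "cop_tree t" "weight t" "cop_forest N" "fweight N"]
    by (simp add: cop_forest_add_mset)
qed

lemma cuts_graded: "\<forall>z\<in>#cuts t. fweight (fst z) + weight (snd z) = weight t"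
proof (induction t)
  case (Node ts)
  have "graded (cop_tree t) (weight t)" if "t \<in># ts" for t
  proof -
    have "\<forall>z\<in>#cuts t. fweight (fst z) + weight (snd z) = weight t" using Node that by simp
    then show ?thesis unfolding graded_def cop_tree_cuts by auto
  qed
  then have "graded (cop_forest ts) (fweight ts)" by (rule cop_forest_graded_aux)
  then show ?case unfolding cuts_Node_cop graded_def by (auto simp: fweight_def)
qed

lemma cop_tree_graded: "graded (cop_tree t) (weight t)"
  using cuts_graded[of t] unfolding graded_def cop_tree_cuts by auto

lemma cop_forest_graded: "graded (cop_forest N) (fweight N)"
  by (rule cop_forest_graded_aux) (rule cop_tree_graded)

lemma cop_forest_grade: "z \<in># cop_forest N \<Longrightarrow> fweight (fst z) + fweight (snd z) = fweight N"
  using cop_forest_graded unfolding graded_def by auto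

section \<open>Grafting\<close>

lemma image_mset_sum_mset: "image_mset f (sum_mset X) = sum_mset (image_mset (image_mset f) X)"
  by (induction X) auto

lemma gf_empty[simp]: "graft_forest M {#} = {#}" by (simp add: graft_forest_def)

lemma gf_plus: "graft_forest M (N1 + N2) =
   image_mset (\<lambda>G. G + N2) (graft_forest M N1) + image_mset (\<lambda>G. N1 + G) (graft_forest M N2)"
proof -
  have 1: "image_mset (\<lambda>t. image_mset (\<lambda>t'. N1 + N2 - {#t#} + {#t'#}) (graft_tree M t)) N1
     = image_mset (\<lambda>t. image_mset (\<lambda>G. G + N2) (image_mset (\<lambda>t'. N1 - {#t#} + {#t'#}) (graft_tree M t))) N1"
  proof (rule image_mset_cong)
    fix t assume "t \<in># N1"
    then have "N2 + N1 - {#t#} = N2 + (N1 - {#t#})" by (rule diff_union_single_conv)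
    then have "\<And>t'. N1 + N2 - {#t#} + {#t'#} = N1 - {#t#} + {#t'#} + N2"
      by (simp add: add_ac)
    then show "image_mset (\<lambda>t'. N1 + N2 - {#t#} + {#t'#}) (graft_tree M t) =
       image_mset (\<lambda>G. G + N2) (image_mset (\<lambda>t'. N1 - {#t#} + {#t'#}) (graft_tree M t))"
      by (simp add: multiset.map_comp comp_def)
  qed
  have 2: "image_mset (\<lambda>t. image_mset (\<lambda>t'. N1 + N2 - {#t#} + {#t'#}) (graft_tree M t)) N2
     = image_mset (\<lambda>t. image_mset (\<lambda>G. N1 + G) (image_mset (\<lambda>t'. N2 - {#t#} + {#t'#}) (graft_tree M t))) N2"
  proof (rule image_mset_cong)
    fix t assume "t \<in># N2"
    then have "N1 + N2 - {#t#} = N1 + (N2 - {#t#})" by (rule diff_union_single_conv)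
    then have "\<And>t'. N1 + N2 - {#t#} + {#t'#} = N1 + (N2 - {#t#} + {#t'#})"
      by (simp add: add_ac)
    then show "image_mset (\<lambda>t'. N1 + N2 - {#t#} + {#t'#}) (graft_tree M t) =
       image_mset (\<lambda>G. N1 + G) (image_mset (\<lambda>t'. N2 - {#t#} + {#t'#}) (graft_tree M t))"
      by (simp add: multiset.map_comp comp_def)
  qed
  show ?thesis
    unfolding graft_forest_def image_mset_union sum_mset.union 1 2
    by (simp add: image_mset_sum_mset multiset.map_comp comp_def)
qed

lemma gf_single: "graft_forest M {#t#} = image_mset (\<lambda>t'. {#t'#}) (graft_tree M t)"
  by (simp add: graft_forest_def)

lemma gt_Node: "graft_tree M (Node ts) = add_mset (Node (ts + M)) (image_mset Node (graft_forest M ts))"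
  by (simp add: graft_forest_def image_mset_sum_mset multiset.map_comp comp_def)

declare graft_tree.simps[simp del] cuts.simps[simp del]

section \<open>The derivation Phi\<close>

definition phi1 :: "forest \<Rightarrow> forest \<times> forest \<Rightarrow> (forest \<times> forest) multiset" where
  "phi1 M z = image_mset (\<lambda>P'. (P', snd z)) (graft_forest M (fst z)) +
     (\<Sum>w\<in>#cop_forest M. image_mset (\<lambda>G. (fst w + fst z, G)) (graft_forest (snd w) (snd z)))"

definition Phi :: "forest \<Rightarrow> (forest \<times> forest) multiset \<Rightarrow> (forest \<times> forest) multiset" where
  "Phi M X = (\<Sum>z\<in>#X. phi1 M z)"

lemma Phi_plus: "Phi M (X + Y) = Phi M X + Phi M Y" by (simp add: Phi_def)
lemma Phi_empty[simp]: "Phi M {#} = {#}" by (simp add: Phi_def)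
lemma Phi_single[simp]: "Phi M {#z#} = phi1 M z" by (simp add: Phi_def)

lemma pairprod_double: "pairprod X Y = (\<Sum>x\<in>#X. \<Sum>y\<in>#Y. {#pp x y#})"
proof (induction X)
  case empty then show ?case by simp
next
  case (add x X)
  have "image_mset (pp x) Y = (\<Sum>y\<in>#Y. {#pp x y#})" by (induction Y) auto
  then show ?case by (simp add: pairprod_add_mset add)
qed

lemma pairprod_sum_left: "pairprod (\<Sum>i\<in>#I. f i) Y = (\<Sum>i\<in>#I. pairprod (f i) Y)"
  by (induction I) (simp_all add: pairprod_plus1)
lemma pairprod_sum_right: "pairprod X (\<Sum>i\<in>#I. f i) = (\<Sum>i\<in>#I. pairprod X (f i))"
  by (induction I) (simp_all add: pairprod_plus2)
lemma pairprod_single_right: "pairprod X {#y#} = image_mset (\<lambda>x. pp x y) X"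
  by (simp add: pairprod_add_mset2)
lemma pairprod_single_left: "pairprod {#x#} Y = image_mset (pp x) Y"
  by (simp add: pairprod_add_mset)
lemma pairprod_image_sum: "image_mset f X = (\<Sum>x\<in>#X. {#f x#})"
  by (induction X) auto

lemma phi1_pp: "phi1 M (pp x y) = pairprod (phi1 M x) {#y#} + pairprod {#x#} (phi1 M y)"
proof -
  obtain P1 R1 where x: "x = (P1, R1)" by (cases x)
  obtain P2 R2 where y: "y = (P2, R2)" by (cases y)
  define S where "S = (\<lambda>R P. (\<Sum>w\<in>#cop_forest M. image_mset (\<lambda>G. (fst w + P, G)) (graft_forest (snd w) R)))"
  have L: "phi1 M (pp x y) = image_mset (\<lambda>G. (G + P2, R1 + R2)) (graft_forest M P1)
      + image_mset (\<lambda>G. (P1 + G, R1 + R2)) (graft_forest M P2) + S (R1 + R2) (P1 + P2)"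
    by (simp add: x y phi1_def pp_def S_def gf_plus multiset.map_comp comp_def)
  have a: "S (R1 + R2) (P1 + P2) = (\<Sum>w\<in>#cop_forest M. image_mset (\<lambda>G. (fst w + P1 + P2, G + R2)) (graft_forest (snd w) R1))
        + (\<Sum>w\<in>#cop_forest M. image_mset (\<lambda>G. (P1 + (fst w + P2), R1 + G)) (graft_forest (snd w) R2))"
    unfolding S_def sum_mset.distrib[symmetric]
    by (rule arg_cong[where f=sum_mset], rule image_mset_cong) (simp add: gf_plus multiset.map_comp comp_def add_ac)
  have R1: "pairprod (phi1 M x) {#y#} = image_mset (\<lambda>G. (G + P2, R1 + R2)) (graft_forest M P1)
     + (\<Sum>w\<in>#cop_forest M. image_mset (\<lambda>G. (fst w + P1 + P2, G + R2)) (graft_forest (snd w) R1))"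
    unfolding pairprod_single_right x y phi1_def
    by (simp add: pp_def multiset.map_comp comp_def image_mset_sum_mset)
  have R2: "pairprod {#x#} (phi1 M y) = image_mset (\<lambda>G. (P1 + G, R1 + R2)) (graft_forest M P2)
     + (\<Sum>w\<in>#cop_forest M. image_mset (\<lambda>G. (P1 + (fst w + P2), R1 + G)) (graft_forest (snd w) R2))"
    unfolding pairprod_single_left x y phi1_def
    by (simp add: pp_def multiset.map_comp comp_def image_mset_sum_mset)
  show ?thesis unfolding L a R1 R2 by (simp only: add_ac)
qed

lemma sum_mset_sum_mset_gen:
  fixes f :: "'a \<Rightarrow> 'b::comm_monoid_add multiset"
  shows "sum_mset (\<Sum>x\<in>#X. f x) = (\<Sum>x\<in>#X. sum_mset (f x))"
proof (induction X)
  case empty then show ?case by simp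
next
  case (add x X) then show ?case by simp
qed

lemma Phi_pairprod: "Phi M (pairprod X Y) = pairprod (Phi M X) Y + pairprod X (Phi M Y)"
proof -
  have "Phi M (pairprod X Y) = (\<Sum>x\<in>#X. \<Sum>y\<in>#Y. phi1 M (pp x y))"
    unfolding pairprod_double Phi_def by (simp add: image_mset_sum_mset multiset.map_comp comp_def sum_mset_sum_mset_gen)
  also have "\<dots> = (\<Sum>x\<in>#X. \<Sum>y\<in>#Y. pairprod (phi1 M x) {#y#}) + (\<Sum>x\<in>#X. \<Sum>y\<in>#Y. pairprod {#x#} (phi1 M y))"
    by (simp add: phi1_pp sum_mset.distrib)
  also have "(\<Sum>x\<in>#X. \<Sum>y\<in>#Y. pairprod (phi1 M x) {#y#}) = pairprod (Phi M X) Y"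
  proof -
    have Y: "(\<Sum>y\<in>#Y. {#y#}) = Y" by (induction Y) auto
    have "(\<Sum>x\<in>#X. \<Sum>y\<in>#Y. pairprod (phi1 M x) {#y#}) = (\<Sum>x\<in>#X. pairprod (phi1 M x) (\<Sum>y\<in>#Y. {#y#}))"
      by (simp only: pairprod_sum_right)
    also have "\<dots> = pairprod (Phi M X) Y" by (simp only: Y Phi_def pairprod_sum_left)
    finally show ?thesis .
  qed
  also have "(\<Sum>x\<in>#X. \<Sum>y\<in>#Y. pairprod {#x#} (phi1 M y)) = pairprod X (Phi M Y)"
  proof -
    have X: "(\<Sum>x\<in>#X. {#x#}) = X" by (induction X) auto
    have "(\<Sum>x\<in>#X. \<Sum>y\<in>#Y. pairprod {#x#} (phi1 M y)) = (\<Sum>y\<in>#Y. \<Sum>x\<in>#X. pairprod {#x#} (phi1 M y))"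
      by (rule sum_mset.swap)
    also have "\<dots> = (\<Sum>y\<in>#Y. pairprod (\<Sum>x\<in>#X. {#x#}) (phi1 M y))"
      by (simp only: pairprod_sum_left)
    also have "\<dots> = pairprod X (Phi M Y)" by (simp only: X Phi_def pairprod_sum_right)
    finally show ?thesis .
  qed
  finally show ?thesis .
qed

definition psi1 :: "forest \<Rightarrow> forest \<times> rtree \<Rightarrow> (forest \<times> rtree) multiset" where
  "psi1 M z = image_mset (\<lambda>P'. (P', snd z)) (graft_forest M (fst z)) +
     (\<Sum>w\<in>#cop_forest M. image_mset (\<lambda>R'. (fst w + fst z, R')) (graft_tree (snd w) (snd z)))"

definition Psi :: "forest \<Rightarrow> (forest \<times> rtree) multiset \<Rightarrow> (forest \<times> rtree) multiset" where
  "Psi M Y = (\<Sum>z\<in>#Y. psi1 M z)"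

lemma sum_mset_singletons: "(\<Sum>x\<in>#X. {#f x#}) = image_mset f X"
  by (induction X) auto

lemma phi1_unit[simp]: "phi1 M ({#}, {#}) = {#}" by (simp add: phi1_def)

lemma FL_of_TL:
  assumes "\<And>t. t \<in># N \<Longrightarrow> (\<Sum>t'\<in>#graft_tree M t. cop_tree t') = Phi M (cop_tree t)"
  shows "(\<Sum>G\<in>#graft_forest M N. cop_forest G) = Phi M (cop_forest N)"
  using assms
proof (induction N)
  case empty then show ?case by simp
next
  case (add t N)
  have IH: "(\<Sum>G\<in>#graft_forest M N. cop_forest G) = Phi M (cop_forest N)" using add by auto
  have T: "(\<Sum>t'\<in>#graft_tree M t. cop_tree t') = Phi M (cop_tree t)" using add by auto
  have 1: "(\<Sum>G\<in>#graft_forest M {#t#}. cop_forest (G + N)) = pairprod (Phi M (cop_tree t)) (cop_forest N)"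
    by (simp add: gf_single multiset.map_comp comp_def cop_forest_add_mset T[symmetric] pairprod_sum_left)
  have 2: "(\<Sum>G\<in>#graft_forest M N. cop_forest ({#t#} + G)) = pairprod (cop_tree t) (Phi M (cop_forest N))"
    by (simp add: cop_forest_add_mset IH[symmetric] pairprod_sum_right)
  have "add_mset t N = {#t#} + N" by simp
  then have "(\<Sum>G\<in>#graft_forest M (add_mset t N). cop_forest G) =
      (\<Sum>G\<in>#graft_forest M {#t#}. cop_forest (G + N)) + (\<Sum>G\<in>#graft_forest M N. cop_forest ({#t#} + G))"
    by (simp only: gf_plus image_mset_union sum_mset.union multiset.map_comp comp_def)
  also have "\<dots> = Phi M (pairprod (cop_tree t) (cop_forest N))"
    unfolding 1 2 Phi_pairprod ..
  finally show ?case by (simp add: cop_forest_add_mset)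
qed

lemma TL_of_CL:
  assumes "(\<Sum>t'\<in>#graft_tree M t. cuts t') = Psi M (cuts t)"
  shows "(\<Sum>t'\<in>#graft_tree M t. cop_tree t') = Phi M (cop_tree t)"
proof -
  let ?i = "\<lambda>(P, R). (P, {#R#})"
  have L: "(\<Sum>t'\<in>#graft_tree M t. cop_tree t') =
     image_mset (\<lambda>t'. ({#t'#}, {#})) (graft_tree M t) + image_mset ?i (Psi M (cuts t))"
  proof -
    have "(\<Sum>t'\<in>#graft_tree M t. cop_tree t') = (\<Sum>t'\<in>#graft_tree M t. {#({#t'#}, {#})#} + image_mset ?i (cuts t'))"
      by (simp add: cop_tree_cuts)
    also have "\<dots> = image_mset (\<lambda>t'. ({#t'#}, {#})) (graft_tree M t) + image_mset ?i (\<Sum>t'\<in>#graft_tree M t. cuts t')"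
      by (simp only: sum_mset.distrib sum_mset_singletons image_mset_sum_mset multiset.map_comp comp_def)
    finally show ?thesis by (simp only: assms)
  qed
  have a: "phi1 M ({#t#}, {#}) = image_mset (\<lambda>t'. ({#t'#}, {#})) (graft_tree M t)"
    by (simp add: phi1_def gf_single multiset.map_comp comp_def)
  have b: "phi1 M (?i z) = image_mset ?i (psi1 M z)" for z
    by (cases z) (simp add: phi1_def psi1_def gf_single multiset.map_comp comp_def image_mset_sum_mset)
  have "Phi M (cop_tree t) = phi1 M ({#t#}, {#}) + (\<Sum>z\<in>#cuts t. phi1 M (?i z))"
    by (simp add: cop_tree_cuts Phi_def multiset.map_comp comp_def)
  also have "\<dots> = image_mset (\<lambda>t'. ({#t'#}, {#})) (graft_tree M t) + image_mset ?i (Psi M (cuts t))"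
    unfolding a b by (simp add: Psi_def image_mset_sum_mset multiset.map_comp comp_def)
  finally show ?thesis using L by simp
qed

lemma CL_of_FL:
  assumes "(\<Sum>G\<in>#graft_forest M ts. cop_forest G) = Phi M (cop_forest ts)"
  shows "(\<Sum>t'\<in>#graft_tree M (Node ts). cuts t') = Psi M (cuts (Node ts))"
proof -
  let ?n = "\<lambda>(P, R). (P, Node R)"
  have "(\<Sum>t'\<in>#graft_tree M (Node ts). cuts t') =
      image_mset ?n (pairprod (cop_forest ts) (cop_forest M)) + image_mset ?n (Phi M (cop_forest ts))"
  proof -
    have h: "image_mset ?n (\<Sum>G\<in>#graft_forest M ts. cop_forest G) = (\<Sum>G\<in>#graft_forest M ts. image_mset ?n (cop_forest G))"
      by (simp only: image_mset_sum_mset multiset.map_comp comp_def)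
    have "(\<Sum>t'\<in>#graft_tree M (Node ts). cuts t') = cuts (Node (ts + M)) + (\<Sum>G\<in>#graft_forest M ts. cuts (Node G))"
      by (simp only: gt_Node image_mset_add_mset sum_mset.add_mset multiset.map_comp comp_def)
    also have "\<dots> = image_mset ?n (pairprod (cop_forest ts) (cop_forest M)) + (\<Sum>G\<in>#graft_forest M ts. image_mset ?n (cop_forest G))"
      by (simp only: cuts_Node_cop cop_forest_plus)
    finally show ?thesis by (simp only: h[symmetric] assms)
  qed
  also have "\<dots> = Psi M (cuts (Node ts))"
  proof -
    have e: "psi1 M (?n z) = image_mset ?n (phi1 M z) +
        (\<Sum>w\<in>#cop_forest M. {#(fst w + fst z, Node (snd z + snd w))#})" for z
    proof -
      obtain P R where z: "z = (P, R)" by (cases z)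
      have "(\<Sum>w\<in>#cop_forest M. image_mset (\<lambda>R'. (fst w + P, R')) (graft_tree (snd w) (Node R)))
         = (\<Sum>w\<in>#cop_forest M. {#(fst w + P, Node (R + snd w))#}) +
           (\<Sum>w\<in>#cop_forest M. image_mset ?n (image_mset (\<lambda>G. (fst w + P, G)) (graft_forest (snd w) R)))"
      proof -
        have "(\<Sum>w\<in>#cop_forest M. image_mset (\<lambda>R'. (fst w + P, R')) (graft_tree (snd w) (Node R)))
          = (\<Sum>w\<in>#cop_forest M. {#(fst w + P, Node (R + snd w))#} +
               image_mset ?n (image_mset (\<lambda>G. (fst w + P, G)) (graft_forest (snd w) R)))"
          by (rule arg_cong[of _ _ sum_mset], rule image_mset_cong) (simp add: gt_Node multiset.map_comp comp_def)
        then show ?thesis by (simp only: sum_mset.distrib)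
      qed
      then show ?thesis
        by (simp add: z psi1_def phi1_def multiset.map_comp comp_def image_mset_sum_mset add_ac)
    qed
    have "Psi M (cuts (Node ts)) = (\<Sum>z\<in>#cop_forest ts. psi1 M (?n z))"
      by (simp add: Psi_def cuts_Node_cop multiset.map_comp comp_def)
    also have "\<dots> = image_mset ?n (Phi M (cop_forest ts)) +
        (\<Sum>z\<in>#cop_forest ts. \<Sum>w\<in>#cop_forest M. {#(fst w + fst z, Node (snd z + snd w))#})"
      unfolding e sum_mset.distrib by (simp add: Phi_def image_mset_sum_mset multiset.map_comp comp_def)
    also have "(\<Sum>z\<in>#cop_forest ts. \<Sum>w\<in>#cop_forest M. {#(fst w + fst z, Node (snd z + snd w))#})
        = image_mset ?n (pairprod (cop_forest ts) (cop_forest M))"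
      by (simp add: pairprod_double image_mset_sum_mset multiset.map_comp comp_def pp_def add_ac)
    finally show ?thesis by (simp add: add_ac)
  qed
  finally show ?thesis .
qed

lemma CL: "(\<Sum>t'\<in>#graft_tree M t. cuts t') = Psi M (cuts t)"
proof (induction t)
  case (Node ts)
  have "(\<Sum>t'\<in>#graft_tree M t. cop_tree t') = Phi M (cop_tree t)" if "t \<in># ts" for t
    using Node that by (intro TL_of_CL) auto
  then have "(\<Sum>G\<in>#graft_forest M ts. cop_forest G) = Phi M (cop_forest ts)" by (rule FL_of_TL)
  then show ?case by (rule CL_of_FL)
qed

theorem FL: "(\<Sum>G\<in>#graft_forest M N. cop_forest G) = Phi M (cop_forest N)"
  by (intro FL_of_TL TL_of_CL CL)



lemma sum_mset_count:
  fixes g :: "'a \<Rightarrow> 'b::comm_semiring_1"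
  assumes "finite W" "set_mset X \<subseteq> W"
  shows "(\<Sum>w\<in>#X. g w) = (\<Sum>w\<in>W. of_nat (count X w) * g w)"
  using assms(2)
proof (induction X)
  case empty then show ?case by simp
next
  case (add x X)
  then have x: "x \<in> W" and X: "set_mset X \<subseteq> W" by auto
  have "(\<Sum>w\<in>W. of_nat (count (add_mset x X) w) * g w) =
      (\<Sum>w\<in>W. of_nat (count X w) * g w) + (\<Sum>w\<in>W. if w = x then g w else 0)"
    by (simp add: sum.distrib[symmetric] algebra_simps, rule sum.cong, auto simp: algebra_simps)
  also have "(\<Sum>w\<in>W. if w = x then g w else 0) = g x"
    using x assms(1) by (simp add: sum.delta')
  finally show ?case using add X by (simp add: add.commute)
qed

lemma count_sum_mset: "count (sum_mset XS) a = (\<Sum>X\<in>#XS. count X a)"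
  by (induction XS) auto

definition supp :: "(forest \<Rightarrow> rat) \<Rightarrow> forest set" where
  "supp x = {F. x F \<noteq> 0}"

lemma hr_elem_supp: "hr_elem x \<longleftrightarrow> finite (supp x)"
  by (simp add: hr_elem_def supp_def)

lemma sum_supp:
  fixes g :: "forest \<Rightarrow> rat"
  assumes "finite S" "supp x \<subseteq> S"
  shows "(\<Sum>F\<in>{F. x F \<noteq> 0}. x F * g F) = (\<Sum>F\<in>S. x F * g F)"
  using assms by (intro sum.mono_neutral_left) (auto simp: supp_def)

lemma hr_cop_eq:
  assumes "finite S" "supp x \<subseteq> S"
  shows "hr_cop x (A, B) = (\<Sum>F\<in>S. x F * of_nat (count (cop_forest F) (A, B)))"
  unfolding hr_cop_def using sum_supp[OF assms] by simp

definition gsum :: "forest \<Rightarrow> forest \<Rightarrow> forest \<Rightarrow> rat" where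
  "gsum M N F = (if N = {#} then 0 else of_nat (count (graft_forest M N) F) / of_nat (fweight N))"

lemma top_eq:
  assumes "finite S" "supp x \<subseteq> S" "finite T" "supp y \<subseteq> T"
  shows "top x y F = (\<Sum>M\<in>S. \<Sum>N\<in>T. x M * y N * gsum M N F)"
proof -
  have "top x y F = (\<Sum>M\<in>{M. x M \<noteq> 0}. x M * (\<Sum>N\<in>{N. y N \<noteq> 0}. y N * gsum M N F))"
    by (simp add: top_def gsum_def sum_distrib_left mult.assoc)
  also have "\<dots> = (\<Sum>M\<in>S. x M * (\<Sum>N\<in>T. y N * gsum M N F))"
    by (simp add: sum_supp[OF assms(3,4)] sum_supp[OF assms(1,2)])
  finally show ?thesis by (simp add: sum_distrib_left mult.assoc)
qed

definition gsupp :: "(forest \<Rightarrow> rat) \<Rightarrow> (forest \<Rightarrow> rat) \<Rightarrow> forest set" where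
  "gsupp x y = (\<Union>M\<in>supp x. \<Union>N\<in>supp y. set_mset (graft_forest M N))"

lemma supp_top: "supp (top x y) \<subseteq> gsupp x y"
proof
  fix F assume "F \<in> supp (top x y)"
  then have "top x y F \<noteq> 0" by (simp add: supp_def)
  then obtain M N where "x M \<noteq> 0" "y N \<noteq> 0" "count (graft_forest M N) F \<noteq> 0"
    unfolding top_def by (auto elim!: sum.not_neutral_contains_not_neutral split: if_splits)
  then show "F \<in> gsupp x y" by (auto simp: gsupp_def supp_def)
qed

lemma hr_elem_top: "hr_elem x \<Longrightarrow> hr_elem y \<Longrightarrow> hr_elem (top x y)"
  unfolding hr_elem_supp
  by (rule finite_subset[OF supp_top]) (simp add: gsupp_def)

section \<open>Primitive elements\<close>

definition e1 :: "forest \<Rightarrow> rat" where "e1 F = (if F = {#} then 1 else 0)"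

lemma cop_forest_empty_pair:
  "count (cop_forest F) ({#}, {#}) = (if F = {#} then 1 else 0)"
proof (cases "F = {#}")
  case True then show ?thesis by simp
next
  case False
  then have "fweight F \<noteq> 0" by (simp add: fweight_zero_iff)
  then have "({#}, {#}) \<notin># cop_forest F" using cop_forest_grade[of "({#},{#})" F] by auto
  then show ?thesis using False by (simp add: count_eq_zero_iff)
qed

lemma prim_elem: "primitive q \<Longrightarrow> hr_elem q" by (simp add: primitive_def)

lemma prim_eq: "primitive q \<Longrightarrow>
   hr_cop q (A, B) = (if B = {#} then q A else 0) + (if A = {#} then q B else 0)"
  unfolding primitive_def by simp

lemma prim_empty: assumes "primitive q" shows "q {#} = 0"
proof -
  have f: "finite (supp q)" using prim_elem[OF assms] by (simp add: hr_elem_supp)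
  have "hr_cop q ({#}, {#}) = (\<Sum>F\<in>insert {#} (supp q). q F * of_nat (count (cop_forest F) ({#}, {#})))"
    by (rule hr_cop_eq) (use f in auto)
  also have "\<dots> = (\<Sum>F\<in>insert {#} (supp q). if F = {#} then q F else 0)"
    by (rule sum.cong) (auto simp: cop_forest_empty_pair)
  also have "\<dots> = q {#}" using f by (simp add: sum.delta)
  finally show ?thesis using prim_eq[OF assms, of "{#}" "{#}"] by simp
qed

lemma PT:
  fixes \<phi> :: "forest \<times> forest \<Rightarrow> rat"
  assumes q: "primitive q"
  shows "(\<Sum>N\<in>supp q. q N * (if N = {#} then 0 else (\<Sum>z\<in>#cop_forest N. \<phi> z) / of_nat (fweight N)))
       = (\<Sum>N\<in>supp q. q N * (if N = {#} then 0 else (\<phi> (N, {#}) + \<phi> ({#}, N)) / of_nat (fweight N)))"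
proof -
  define SQ where "SQ = supp q"
  have fSQ: "finite SQ" using prim_elem[OF q] by (simp add: hr_elem_supp SQ_def)
  have q0: "q {#} = 0" by (rule prim_empty[OF q])
  define \<psi> where "\<psi> z = \<phi> z / of_nat (fweight (fst z) + fweight (snd z))" for z
  define U where "U = insert {#} (SQ \<union> (\<Union>N\<in>SQ. fst ` set_mset (cop_forest N) \<union> snd ` set_mset (cop_forest N)))"
  have fU: "finite U" using fSQ by (simp add: U_def)
  define W where "W = U \<times> U"
  have fW: "finite W" using fU by (simp add: W_def)
  have copW: "set_mset (cop_forest N) \<subseteq> W" if "N \<in> SQ" for N
  proof
    fix z assume "z \<in># cop_forest N"
    then have "fst z \<in> U" "snd z \<in> U" using that unfolding U_def by blast+
    then show "z \<in> W" by (simp add: W_def mem_Times_iff)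
  qed
  have SQU: "SQ \<subseteq> U" by (auto simp: U_def)
  have "(\<Sum>N\<in>SQ. q N * (if N = {#} then 0 else (\<Sum>z\<in>#cop_forest N. \<phi> z) / of_nat (fweight N)))
      = (\<Sum>N\<in>SQ. q N * (\<Sum>z\<in>#cop_forest N. \<psi> z))"
  proof (rule sum.cong)
    fix N assume N: "N \<in> SQ"
    then have "N \<noteq> {#}" using q0 by (auto simp: SQ_def supp_def)
    moreover have "(\<Sum>z\<in>#cop_forest N. \<phi> z) / of_nat (fweight N) = (\<Sum>z\<in>#cop_forest N. \<psi> z)"
    proof -
      have "(\<Sum>z\<in>#cop_forest N. \<phi> z) / of_nat (fweight N) = (\<Sum>z\<in>#cop_forest N. \<phi> z) * (1 / of_nat (fweight N))"
        by simp
      also have "\<dots> = (\<Sum>z\<in>#cop_forest N. \<phi> z * (1 / of_nat (fweight N)))"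
        by (rule sum_mset_distrib_right)
      also have "\<dots> = (\<Sum>z\<in>#cop_forest N. \<psi> z)"
        by (rule arg_cong[of _ _ sum_mset], rule image_mset_cong) (simp add: \<psi>_def cop_forest_grade)
      finally show ?thesis .
    qed
    ultimately show "q N * (if N = {#} then 0 else (\<Sum>z\<in>#cop_forest N. \<phi> z) / of_nat (fweight N))
      = q N * (\<Sum>z\<in>#cop_forest N. \<psi> z)" by simp
  qed simp
  also have "\<dots> = (\<Sum>N\<in>SQ. q N * (\<Sum>z\<in>W. of_nat (count (cop_forest N) z) * \<psi> z))"
    by (rule sum.cong) (simp_all add: sum_mset_count[OF fW copW])
  also have "\<dots> = (\<Sum>z\<in>W. \<psi> z * (\<Sum>N\<in>SQ. q N * of_nat (count (cop_forest N) z)))"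
    unfolding sum_distrib_left by (subst sum.swap) (simp add: mult_ac)
  also have "\<dots> = (\<Sum>z\<in>W. \<psi> z * hr_cop q z)"
    by (rule sum.cong) (auto simp: hr_cop_eq[OF fSQ] SQ_def)
  also have "\<dots> = (\<Sum>z\<in>W. \<psi> z * ((if snd z = {#} then q (fst z) else 0) + (if fst z = {#} then q (snd z) else 0)))"
    by (rule sum.cong) (auto simp: prim_eq[OF q])
  also have "\<dots> = (\<Sum>P\<in>U. \<Sum>R\<in>U. \<psi> (P, R) * ((if R = {#} then q P else 0) + (if P = {#} then q R else 0)))"
    by (simp add: W_def sum.cartesian_product case_prod_beta)
  also have "\<dots> = (\<Sum>P\<in>U. \<psi> (P, {#}) * q P) + (\<Sum>R\<in>U. \<psi> ({#}, R) * q R)"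
  proof -
    have "(\<Sum>P\<in>U. \<Sum>R\<in>U. \<psi> (P, R) * ((if R = {#} then q P else 0) + (if P = {#} then q R else 0)))
      = (\<Sum>P\<in>U. \<Sum>R\<in>U. (if R = {#} then \<psi> (P, R) * q P else 0)) + (\<Sum>P\<in>U. \<Sum>R\<in>U. (if P = {#} then \<psi> (P, R) * q R else 0))"
    proof -
      have "\<And>P R. \<psi> (P, R) * ((if R = {#} then q P else 0) + (if P = {#} then q R else 0))
        = (if R = {#} then \<psi> (P, R) * q P else 0) + (if P = {#} then \<psi> (P, R) * q R else 0)"
        by (simp add: distrib_left)
      then show ?thesis by (simp only: sum.distrib)
    qed
    also have "\<dots> = (\<Sum>P\<in>U. \<psi> (P, {#}) * q P) + (\<Sum>R\<in>U. \<psi> ({#}, R) * q R)"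
    proof -
      have "{#} \<in> U" by (simp add: U_def)
      moreover have "(\<Sum>R\<in>U. (if P = {#} then \<psi> (P, R) * q R else 0)) = (if P = {#} then (\<Sum>R\<in>U. \<psi> (P, R) * q R) else 0)" for P
        by simp
      ultimately show ?thesis using fU by (simp only: sum.delta' if_True) simp
    qed
    finally show ?thesis .
  qed
  also have "\<dots> = (\<Sum>N\<in>U. q N * (\<psi> (N, {#}) + \<psi> ({#}, N)))"
    by (simp add: sum.distrib[symmetric] algebra_simps)
  also have "\<dots> = (\<Sum>N\<in>SQ. q N * (\<psi> (N, {#}) + \<psi> ({#}, N)))"
    by (rule sum.mono_neutral_right[OF fU SQU]) (auto simp: SQ_def supp_def)
  also have "\<dots> = (\<Sum>N\<in>SQ. q N * (if N = {#} then 0 else (\<phi> (N, {#}) + \<phi> ({#}, N)) / of_nat (fweight N)))"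
    by (rule sum.cong) (auto simp: \<psi>_def add_divide_distrib SQ_def supp_def q0)
  finally show ?thesis by (simp add: SQ_def)
qed

lemma count_image_pair_left: "count (image_mset (\<lambda>P. (P, c)) X) (A, B) = (if B = c then count X A else 0)"
  by (induction X) auto

lemma count_image_pair_right: "count (image_mset (Pair c) X) (A, B) = (if c = A then count X B else 0)"
  by (induction X) auto

lemma count_phi1_left: "count (phi1 M (N, {#})) (A, B) = (if B = {#} then count (graft_forest M N) A else 0)"
  by (simp add: phi1_def count_image_pair_left)

lemma count_phi1_right:
  "count (phi1 M ({#}, N)) (A, B) = (\<Sum>w\<in>#cop_forest M. if fst w = A then count (graft_forest (snd w) N) B else 0)"
proof -
  have "image_mset (\<lambda>G. (fst w, G)) X = image_mset (Pair (fst w)) X" for w and X :: "forest multiset"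
    by simp
  then show ?thesis
    by (simp add: phi1_def count_sum_mset multiset.map_comp comp_def count_image_pair_right)
qed

lemma sum_mset_fst:
  fixes h :: "forest \<Rightarrow> rat"
  assumes "finite S" "snd ` set_mset X \<subseteq> S"
  shows "(\<Sum>w\<in>#X. if fst w = A then h (snd w) else 0) = (\<Sum>m\<in>S. of_nat (count X (A, m)) * h m)"
  using assms(2)
proof (induction X)
  case empty then show ?case by simp
next
  case (add x X)
  then have x: "snd x \<in> S" and X: "snd ` set_mset X \<subseteq> S" by auto
  have "(\<Sum>m\<in>S. of_nat (count (add_mset x X) (A, m)) * h m) =
      (\<Sum>m\<in>S. of_nat (count X (A, m)) * h m) + (\<Sum>m\<in>S. if m = snd x then (if fst x = A then h m else 0) else 0)"
    by (simp add: sum.distrib[symmetric], rule sum.cong, auto simp: algebra_simps)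
  also have "(\<Sum>m\<in>S. if m = snd x then (if fst x = A then h m else 0) else 0) = (if fst x = A then h (snd x) else 0)"
    using x assms(1) by (simp add: sum.delta')
  finally show ?case using add X by (simp add: add.commute)
qed

lemma sum_mset_divide: "(\<Sum>x\<in>#X. f x) / (c::rat) = (\<Sum>x\<in>#X. f x / c)"
  by (induction X) (simp_all add: add_divide_distrib)

lemma sum_swap3: "(\<Sum>a\<in>A. \<Sum>b\<in>B. \<Sum>c\<in>C. f a b c) = (\<Sum>c\<in>C. \<Sum>b\<in>B. \<Sum>a\<in>A. f a b c)"
proof -
  have "(\<Sum>a\<in>A. \<Sum>b\<in>B. \<Sum>c\<in>C. f a b c) = (\<Sum>a\<in>A. \<Sum>c\<in>C. \<Sum>b\<in>B. f a b c)"
    by (rule sum.cong[OF refl], rule sum.swap)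
  also have "\<dots> = (\<Sum>c\<in>C. \<Sum>a\<in>A. \<Sum>b\<in>B. f a b c)" by (rule sum.swap)
  also have "\<dots> = (\<Sum>c\<in>C. \<Sum>b\<in>B. \<Sum>a\<in>A. f a b c)" by (rule sum.cong[OF refl], rule sum.swap)
  finally show ?thesis .
qed

lemma K1:
  assumes hx: "hr_elem x" and q: "primitive q"
  shows "hr_cop (top x q) (A, B) = (if B = {#} then top x q A else 0) + top (\<lambda>M. hr_cop x (A, M)) q B"
proof -
  define SX where "SX = supp x"
  define SQ where "SQ = supp q"
  define SG where "SG = gsupp x q"
  have fSX: "finite SX" using hx by (simp add: SX_def hr_elem_supp)
  have fSQ: "finite SQ" using prim_elem[OF q] by (simp add: SQ_def hr_elem_supp)
  have fSG: "finite SG" using fSX fSQ by (simp add: SG_def gsupp_def SX_def SQ_def)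
  have sG: "supp (top x q) \<subseteq> SG" unfolding SG_def by (rule supp_top)
  have gSG: "set_mset (graft_forest M N) \<subseteq> SG" if "M \<in> SX" "N \<in> SQ" for M N
    using that by (auto simp: SG_def gsupp_def SX_def SQ_def)
  define c where "c G = (of_nat (count (cop_forest G) (A, B)) :: rat)" for G
  define \<phi> where "\<phi> M z = (of_nat (count (phi1 M z) (A, B)) :: rat)" for M z
  have "hr_cop (top x q) (A, B) = (\<Sum>G\<in>SG. top x q G * c G)"
    unfolding c_def by (rule hr_cop_eq[OF fSG sG])
  also have "\<dots> = (\<Sum>G\<in>SG. (\<Sum>M\<in>SX. \<Sum>N\<in>SQ. x M * q N * gsum M N G) * c G)"
    by (simp add: top_eq[OF fSX _ fSQ] SX_def SQ_def)
  also have "\<dots> = (\<Sum>M\<in>SX. x M * (\<Sum>N\<in>SQ. q N * (\<Sum>G\<in>SG. gsum M N G * c G)))"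
    unfolding sum_distrib_right sum_distrib_left
    by (subst sum.swap, rule sum.cong, simp, subst sum.swap, simp add: mult_ac)
  also have "\<dots> = (\<Sum>M\<in>SX. x M * (\<Sum>N\<in>SQ. q N * (if N = {#} then 0 else (\<Sum>z\<in>#cop_forest N. \<phi> M z) / of_nat (fweight N))))"
  proof (intro sum.cong refl arg_cong[where f = "\<lambda>u. x _ * u"])
    fix M N assume M: "M \<in> SX" and N: "N \<in> SQ"
    show "q N * (\<Sum>G\<in>SG. gsum M N G * c G) = q N * (if N = {#} then 0 else (\<Sum>z\<in>#cop_forest N. \<phi> M z) / of_nat (fweight N))"
    proof (cases "N = {#}")
      case True then show ?thesis by (simp add: gsum_def)
    next
      case False
      have "(\<Sum>G\<in>SG. gsum M N G * c G) = (\<Sum>G\<in>SG. of_nat (count (graft_forest M N) G) * c G) / of_nat (fweight N)"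
        using False by (simp add: gsum_def sum_divide_distrib)
      also have "(\<Sum>G\<in>SG. of_nat (count (graft_forest M N) G) * c G) = (\<Sum>G\<in>#graft_forest M N. c G)"
        by (rule sum_mset_count[OF fSG gSG[OF M N], symmetric])
      also have "\<dots> = of_nat (count (\<Sum>G\<in>#graft_forest M N. cop_forest G) (A, B))"
        by (simp add: c_def count_sum_mset multiset.map_comp comp_def)
      also have "\<dots> = of_nat (count (Phi M (cop_forest N)) (A, B))" by (simp only: FL)
      also have "\<dots> = (\<Sum>z\<in>#cop_forest N. \<phi> M z)"
        by (simp add: Phi_def count_sum_mset \<phi>_def multiset.map_comp comp_def)
      finally show ?thesis using False by simp
    qed
  qed
  also have "\<dots> = (\<Sum>M\<in>SX. x M * (\<Sum>N\<in>SQ. q N * (if N = {#} then 0 else (\<phi> M (N, {#}) + \<phi> M ({#}, N)) / of_nat (fweight N))))"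
    unfolding SQ_def by (simp only: PT[OF q])
  also have "\<dots> = (if B = {#} then (\<Sum>M\<in>SX. \<Sum>N\<in>SQ. x M * q N * gsum M N A) else 0)
     + (\<Sum>M\<in>SX. x M * (\<Sum>N\<in>SQ. q N * (if N = {#} then 0 else \<phi> M ({#}, N) / of_nat (fweight N))))"
  proof -
    have pw: "\<And>M N. x M * (q N * (if N = {#} then 0 else (\<phi> M (N, {#}) + \<phi> M ({#}, N)) / of_nat (fweight N)))
      = (if B = {#} then x M * q N * gsum M N A else 0) + x M * (q N * (if N = {#} then 0 else \<phi> M ({#}, N) / of_nat (fweight N)))"
      by (simp add: \<phi>_def count_phi1_left gsum_def add_divide_distrib algebra_simps)
    have "(\<Sum>M\<in>SX. x M * (\<Sum>N\<in>SQ. q N * (if N = {#} then 0 else (\<phi> M (N, {#}) + \<phi> M ({#}, N)) / of_nat (fweight N))))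
      = (\<Sum>M\<in>SX. \<Sum>N\<in>SQ. (if B = {#} then x M * q N * gsum M N A else 0))
        + (\<Sum>M\<in>SX. x M * (\<Sum>N\<in>SQ. q N * (if N = {#} then 0 else \<phi> M ({#}, N) / of_nat (fweight N))))"
      by (simp only: sum_distrib_left pw sum.distrib)
    moreover have "(\<Sum>M\<in>SX. \<Sum>N\<in>SQ. (if B = {#} then x M * q N * gsum M N A else 0))
       = (if B = {#} then (\<Sum>M\<in>SX. \<Sum>N\<in>SQ. x M * q N * gsum M N A) else 0)" by simp
    ultimately show ?thesis by simp
  qed
  also have "(\<Sum>M\<in>SX. \<Sum>N\<in>SQ. x M * q N * gsum M N A) = top x q A"
    by (simp add: top_eq[OF fSX _ fSQ] SX_def SQ_def)
  also have "(\<Sum>M\<in>SX. x M * (\<Sum>N\<in>SQ. q N * (if N = {#} then 0 else \<phi> M ({#}, N) / of_nat (fweight N))))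
      = top (\<lambda>M. hr_cop x (A, M)) q B"
  proof -
    define S2 where "S2 = (\<Union>M\<in>SX. snd ` set_mset (cop_forest M))"
    have fS2: "finite S2" using fSX by (simp add: S2_def)
    have hc: "hr_cop x (A, M'') = (\<Sum>M\<in>SX. x M * of_nat (count (cop_forest M) (A, M'')))" for M''
      by (rule hr_cop_eq[OF fSX]) (simp add: SX_def)
    have s2: "supp (\<lambda>M. hr_cop x (A, M)) \<subseteq> S2"
    proof
      fix M'' assume "M'' \<in> supp (\<lambda>M. hr_cop x (A, M))"
      then have "(\<Sum>M\<in>SX. x M * of_nat (count (cop_forest M) (A, M''))) \<noteq> 0" by (simp add: supp_def hc)
      then obtain M where "M \<in> SX" "count (cop_forest M) (A, M'') \<noteq> 0"
        by (auto elim!: sum.not_neutral_contains_not_neutral)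
      then show "M'' \<in> S2" unfolding S2_def by (force simp: count_eq_zero_iff)
    qed
    have inner: "(if N = {#} then 0 else \<phi> M ({#}, N) / of_nat (fweight N)) =
        (\<Sum>M''\<in>S2. of_nat (count (cop_forest M) (A, M'')) * gsum M'' N B)" if M: "M \<in> SX" for M N
    proof (cases "N = {#}")
      case True then show ?thesis by (simp add: gsum_def)
    next
      case False
      have sub: "snd ` set_mset (cop_forest M) \<subseteq> S2" using M by (auto simp: S2_def)
      have "\<phi> M ({#}, N) / of_nat (fweight N) =
          (\<Sum>w\<in>#cop_forest M. if fst w = A then of_nat (count (graft_forest (snd w) N) B) / of_nat (fweight N) else 0)"
        unfolding \<phi>_def count_phi1_right of_nat_sum_mset sum_mset_divide
        by (simp add: multiset.map_comp comp_def, rule arg_cong[of _ _ sum_mset], rule image_mset_cong, simp)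
      also have "\<dots> = (\<Sum>M''\<in>S2. of_nat (count (cop_forest M) (A, M'')) * (of_nat (count (graft_forest M'' N) B) / of_nat (fweight N)))"
        by (rule sum_mset_fst[OF fS2 sub])
      finally show ?thesis using False by (simp add: gsum_def)
    qed
    have "top (\<lambda>M. hr_cop x (A, M)) q B = (\<Sum>M''\<in>S2. \<Sum>N\<in>SQ. hr_cop x (A, M'') * q N * gsum M'' N B)"
      by (rule top_eq[OF fS2 s2 fSQ]) (simp add: SQ_def)
    also have "\<dots> = (\<Sum>M\<in>SX. x M * (\<Sum>N\<in>SQ. q N * (\<Sum>M''\<in>S2. of_nat (count (cop_forest M) (A, M'')) * gsum M'' N B)))"
      unfolding hc sum_distrib_right sum_distrib_left
      by (rule trans[OF sum_swap3]) (simp add: mult_ac)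
    finally show ?thesis by (simp add: inner)
  qed
  finally show ?thesis .
qed

lemma supp_lin: "supp (\<lambda>F. \<Sum>d\<in>D. c d * f d F) \<subseteq> (\<Union>d\<in>D. supp (f d))"
proof
  fix F assume "F \<in> supp (\<lambda>F. \<Sum>d\<in>D. c d * f d F)"
  then have "(\<Sum>d\<in>D. c d * f d F) \<noteq> 0" by (simp add: supp_def)
  then obtain d where "d \<in> D" "c d * f d F \<noteq> 0" by (auto elim!: sum.not_neutral_contains_not_neutral)
  then show "F \<in> (\<Union>d\<in>D. supp (f d))" by (auto simp: supp_def)
qed

lemma hr_elem_lin: "finite D \<Longrightarrow> (\<And>d. d \<in> D \<Longrightarrow> hr_elem (f d)) \<Longrightarrow> hr_elem (\<lambda>F. \<Sum>d\<in>D. c d * f d F)"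
  unfolding hr_elem_supp by (rule finite_subset[OF supp_lin]) auto

lemma top_lin_left:
  assumes D: "finite D" and f: "\<And>d. d \<in> D \<Longrightarrow> hr_elem (f d)" and y: "hr_elem y"
  shows "top (\<lambda>F. \<Sum>d\<in>D. c d * f d F) y G = (\<Sum>d\<in>D. c d * top (f d) y G)"
proof -
  define S where "S = (\<Union>d\<in>D. supp (f d))"
  have fS: "finite S" using D f by (simp add: S_def hr_elem_supp)
  have fT: "finite (supp y)" using y by (simp add: hr_elem_supp)
  have "top (\<lambda>F. \<Sum>d\<in>D. c d * f d F) y G = (\<Sum>M\<in>S. \<Sum>N\<in>supp y. (\<Sum>d\<in>D. c d * f d M) * y N * gsum M N G)"
    by (rule top_eq[OF fS _ fT]) (unfold S_def, rule supp_lin, simp)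
  also have "\<dots> = (\<Sum>M\<in>S. \<Sum>N\<in>supp y. \<Sum>d\<in>D. c d * (f d M * y N * gsum M N G))"
    by (intro sum.cong refl) (simp add: sum_distrib_left sum_distrib_right mult_ac)
  also have "\<dots> = (\<Sum>d\<in>D. \<Sum>N\<in>supp y. \<Sum>M\<in>S. c d * (f d M * y N * gsum M N G))"
    by (rule sum_swap3)
  also have "\<dots> = (\<Sum>d\<in>D. c d * (\<Sum>M\<in>S. \<Sum>N\<in>supp y. f d M * y N * gsum M N G))"
    by (simp add: sum_distrib_left, rule sum.cong[OF refl], rule sum.swap)
  also have "\<dots> = (\<Sum>d\<in>D. c d * top (f d) y G)"
    by (rule sum.cong[OF refl], subst top_eq[OF fS _ fT]) (auto simp: S_def)
  finally show ?thesis .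
qed

lemma hr_cop_lin:
  assumes D: "finite D" and f: "\<And>d. d \<in> D \<Longrightarrow> hr_elem (f d)"
  shows "hr_cop (\<lambda>F. \<Sum>d\<in>D. c d * f d F) (A, B) = (\<Sum>d\<in>D. c d * hr_cop (f d) (A, B))"
proof -
  define S where "S = (\<Union>d\<in>D. supp (f d))"
  have fS: "finite S" using D f by (simp add: S_def hr_elem_supp)
  have "hr_cop (\<lambda>F. \<Sum>d\<in>D. c d * f d F) (A, B) = (\<Sum>F\<in>S. (\<Sum>d\<in>D. c d * f d F) * of_nat (count (cop_forest F) (A, B)))"
    by (rule hr_cop_eq[OF fS]) (unfold S_def, rule supp_lin)
  also have "\<dots> = (\<Sum>d\<in>D. c d * (\<Sum>F\<in>S. f d F * of_nat (count (cop_forest F) (A, B))))"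
    by (simp add: sum_distrib_right sum_distrib_left mult_ac, rule sum.swap)
  also have "\<dots> = (\<Sum>d\<in>D. c d * hr_cop (f d) (A, B))"
    by (rule sum.cong[OF refl], subst hr_cop_eq[OF fS]) (auto simp: S_def)
  finally show ?thesis .
qed

lemma replicate_mset_plus_aux: "replicate_mset a x + replicate_mset b x = replicate_mset (a + b) x"
  by (induction a) auto

lemma graft_empty_forest_aux:
  "(\<And>t. t \<in># N \<Longrightarrow> graft_tree {#} t = replicate_mset (weight t) t) \<Longrightarrow>
    graft_forest {#} N = replicate_mset (fweight N) N"
proof (induction N)
  case empty then show ?case by simp
next
  case (add t N)
  have "graft_forest {#} ({#t#} + N) = image_mset (\<lambda>G. G + N) (graft_forest {#} {#t#}) + image_mset (\<lambda>G. {#t#} + G) (graft_forest {#} N)"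
    by (rule gf_plus)
  also have "\<dots> = replicate_mset (weight t) ({#t#} + N) + replicate_mset (fweight N) ({#t#} + N)"
    using add by (simp add: gf_single)
  finally show ?case by (simp add: replicate_mset_plus_aux)
qed

lemma graft_empty_tree: "graft_tree {#} t = replicate_mset (weight t) t"
proof (induction t)
  case (Node ts)
  then have "graft_forest {#} ts = replicate_mset (fweight ts) ts" by (intro graft_empty_forest_aux) auto
  then show ?case by (simp add: gt_Node fweight_def)
qed

lemma graft_empty_forest: "graft_forest {#} N = replicate_mset (fweight N) N"
  by (rule graft_empty_forest_aux) (rule graft_empty_tree)

lemma top_e1:
  assumes y: "hr_elem y" and y0: "y {#} = 0"
  shows "top e1 y = y"
proof
  fix G
  have fT: "finite (supp y)" using y by (simp add: hr_elem_supp)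
  have "top e1 y G = (\<Sum>M\<in>{{#}}. \<Sum>N\<in>supp y. e1 M * y N * gsum M N G)"
    by (rule top_eq[of "{{#}}" e1 "supp y" y G]) (use fT in \<open>auto simp: supp_def e1_def\<close>)
  also have "\<dots> = (\<Sum>N\<in>supp y. e1 {#} * y N * gsum {#} N G)" by simp
  also have "\<dots> = (\<Sum>N\<in>supp y. if N = G then y N else 0)"
    by (rule sum.cong[OF refl]) (auto simp: e1_def gsum_def graft_empty_forest fweight_zero_iff y0 supp_def)
  also have "\<dots> = y G" using fT by (simp add: sum.delta' supp_def)
  finally show "top e1 y G = y G" .
qed

lemma top_sum_left:
  assumes "finite D" "\<And>d. d \<in> D \<Longrightarrow> hr_elem (f d)" "hr_elem y"
  shows "top (\<lambda>F. \<Sum>d\<in>D. f d F) y G = (\<Sum>d\<in>D. top (f d) y G)"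
  using top_lin_left[OF assms, where c = "\<lambda>_. 1"] by simp

lemma top_add_left:
  assumes "hr_elem a" "hr_elem b" "hr_elem y"
  shows "top (\<lambda>F. a F + b F) y G = top a y G + top b y G"
proof -
  have "top (\<lambda>F. \<Sum>d\<in>{0::nat, 1}. (\<lambda>_. 1) d * (if d = 0 then a else b) F) y G =
     (\<Sum>d\<in>{0::nat, 1}. (\<lambda>_. 1) d * top (if d = 0 then a else b) y G)"
    by (rule top_lin_left) (use assms in auto)
  then show ?thesis by simp
qed

lemma top_smult_left:
  assumes "hr_elem a" "hr_elem y"
  shows "top (\<lambda>F. c * a F) y G = c * top a y G"
proof -
  have "top (\<lambda>F. \<Sum>d\<in>{()}. (\<lambda>_. c) d * (\<lambda>_. a) d F) y G = (\<Sum>d\<in>{()}. (\<lambda>_. c) d * top ((\<lambda>_. a) d) y G)"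
    by (rule top_lin_left) (use assms in auto)
  then show ?thesis by simp
qed

lemma hr_elem_add: "hr_elem a \<Longrightarrow> hr_elem b \<Longrightarrow> hr_elem (\<lambda>F. a F + b F)"
  unfolding hr_elem_supp by (rule finite_subset[of _ "supp a \<union> supp b"]) (auto simp: supp_def)

lemma hr_elem_smult: "hr_elem a \<Longrightarrow> hr_elem (\<lambda>F. c * a F)"
  unfolding hr_elem_supp by (rule finite_subset[of _ "supp a"]) (auto simp: supp_def)

lemma hr_elem_sum: "finite D \<Longrightarrow> (\<And>d. d \<in> D \<Longrightarrow> hr_elem (f d)) \<Longrightarrow> hr_elem (\<lambda>F. \<Sum>d\<in>D. f d F)"
  using hr_elem_lin[of D f, where c = "\<lambda>_. 1"] by simp

lemma hr_elem_e1: "hr_elem e1"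
  unfolding hr_elem_supp by (rule finite_subset[of _ "{{#}}"]) (auto simp: supp_def e1_def)

lemma hr_elem_diff_sum:
  assumes "hr_elem a" "finite D" "\<And>d. d \<in> D \<Longrightarrow> hr_elem (b d)"
  shows "hr_elem (\<lambda>F. a F - (\<Sum>d\<in>D. b d F))"
proof -
  have "hr_elem (\<lambda>F. a F + (-1) * (\<Sum>d\<in>D. b d F))"
    by (intro hr_elem_add hr_elem_smult hr_elem_sum assms)
  then show ?thesis by simp
qed

lemma hr_cop_diff_sum:
  assumes a: "hr_elem a" and D: "finite D" and b: "\<And>d. d \<in> D \<Longrightarrow> hr_elem (b d)"
  shows "hr_cop (\<lambda>F. a F - (\<Sum>d\<in>D. b d F)) (A, B) = hr_cop a (A, B) - (\<Sum>d\<in>D. hr_cop (b d) (A, B))"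
proof -
  define S where "S = supp a \<union> (\<Union>d\<in>D. supp (b d))"
  have fS: "finite S" using a D b by (simp add: S_def hr_elem_supp)
  have s1: "supp (\<lambda>F. a F - (\<Sum>d\<in>D. b d F)) \<subseteq> S"
  proof
    fix F assume "F \<in> supp (\<lambda>F. a F - (\<Sum>d\<in>D. b d F))"
    then have "a F \<noteq> 0 \<or> (\<Sum>d\<in>D. b d F) \<noteq> 0" by (auto simp: supp_def)
    then show "F \<in> S" by (auto simp: S_def supp_def elim!: sum.not_neutral_contains_not_neutral)
  qed
  have "hr_cop (\<lambda>F. a F - (\<Sum>d\<in>D. b d F)) (A, B) = (\<Sum>F\<in>S. (a F - (\<Sum>d\<in>D. b d F)) * of_nat (count (cop_forest F) (A, B)))"
    by (rule hr_cop_eq[OF fS s1])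
  also have "\<dots> = (\<Sum>F\<in>S. a F * of_nat (count (cop_forest F) (A, B))) - (\<Sum>d\<in>D. \<Sum>F\<in>S. b d F * of_nat (count (cop_forest F) (A, B)))"
    by (simp add: left_diff_distrib sum_subtractf sum_distrib_right, rule sum.swap)
  also have "\<dots> = hr_cop a (A, B) - (\<Sum>d\<in>D. hr_cop (b d) (A, B))"
    by (subst hr_cop_eq[OF fS], simp add: S_def, rule arg_cong[where f = "\<lambda>u. _ - u"], rule sum.cong[OF refl],
        subst hr_cop_eq[OF fS]) (auto simp: S_def)
  finally show ?thesis .
qed

lemma tri_sum:
  fixes g :: "nat \<Rightarrow> nat \<Rightarrow> 'a::comm_monoid_add"
  shows "(\<Sum>m\<in>{j<..k}. \<Sum>l\<in>{m<..k}. g l m) = (\<Sum>l\<in>{j<..k}. \<Sum>m\<in>{j<..<l}. g l m)"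
proof -
  let ?I = "{j<..k}"
  have "(\<Sum>m\<in>?I. \<Sum>l\<in>{m<..k}. g l m) = (\<Sum>m\<in>?I. \<Sum>l\<in>?I. if m < l then g l m else 0)"
  proof (rule sum.cong[OF refl])
    fix m assume "m \<in> ?I"
    then have "{m<..k} = {l \<in> ?I. m < l}" by auto
    moreover have "(\<Sum>l\<in>{l \<in> ?I. m < l}. g l m) = (\<Sum>l\<in>?I. if m < l then g l m else 0)"
      by (rule sum.inter_filter) simp
    ultimately show "(\<Sum>l\<in>{m<..k}. g l m) = (\<Sum>l\<in>?I. if m < l then g l m else 0)"
      by simp
  qed
  also have "\<dots> = (\<Sum>l\<in>?I. \<Sum>m\<in>?I. if m < l then g l m else 0)" by (rule sum.swap)
  also have "\<dots> = (\<Sum>l\<in>?I. \<Sum>m\<in>{j<..<l}. g l m)"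
  proof (rule sum.cong[OF refl])
    fix l assume "l \<in> ?I"
    then have "{j<..<l} = {m \<in> ?I. m < l}" by auto
    moreover have "(\<Sum>m\<in>{m \<in> ?I. m < l}. g l m) = (\<Sum>m\<in>?I. if m < l then g l m else 0)"
      by (rule sum.inter_filter) simp
    ultimately show "(\<Sum>m\<in>?I. if m < l then g l m else 0) = (\<Sum>m\<in>{j<..<l}. g l m)"
      by simp
  qed
  finally show ?thesis .
qed

lemma prim_step:
  fixes Y :: "nat \<Rightarrow> forest \<Rightarrow> rat" and X :: "nat \<Rightarrow> nat \<Rightarrow> forest \<Rightarrow> rat" and q :: "nat \<Rightarrow> forest \<Rightarrow> rat"
  assumes hY: "\<And>l. hr_elem (Y l)"
    and hX: "\<And>l m. hr_elem (X l m)"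
    and hq: "\<And>m. j < m \<Longrightarrow> m \<le> k \<Longrightarrow> primitive (q m)"
    and cY: "\<And>m A B. j \<le> m \<Longrightarrow> m \<le> k \<Longrightarrow>
       hr_cop (Y m) (A, B) = Y m A * e1 B + e1 A * Y m B + (\<Sum>l\<in>{m<..k}. Y l A * X l m B)"
    and rX: "\<And>l. j < l \<Longrightarrow> l \<le> k \<Longrightarrow> X l j = (\<lambda>F. q l F + (\<Sum>m\<in>{j<..<l}. top (X l m) (q m) F))"
    and jk: "j \<le> k"
  shows "primitive (\<lambda>F. Y j F - (\<Sum>m\<in>{j<..k}. top (Y m) (q m) F))"
proof -
  define P where "P = (\<lambda>F. Y j F - (\<Sum>m\<in>{j<..k}. top (Y m) (q m) F))"
  define T where "T m = top (Y m) (q m)" for m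
  have hqe: "hr_elem (q m)" if "j < m" "m \<le> k" for m using hq[OF that] by (rule prim_elem)
  have hT: "hr_elem (T m)" if "m \<in> {j<..k}" for m using that hY hqe by (auto simp: T_def intro: hr_elem_top)
  have hP: "hr_elem P" unfolding P_def using hT by (intro hr_elem_diff_sum hY) (auto simp: T_def)
  have "hr_cop P (A, B) = (if B = {#} then P A else 0) + (if A = {#} then P B else 0)" for A B
  proof -
    have copT: "hr_cop (T m) (A, B) = e1 B * T m A + Y m A * q m B + e1 A * T m B
          + (\<Sum>l\<in>{m<..k}. Y l A * top (X l m) (q m) B)" if m: "m \<in> {j<..k}" for m
    proof -
      have qm: "primitive (q m)" using m hq by auto
      have "hr_cop (T m) (A, B) = (if B = {#} then T m A else 0) + top (\<lambda>M. hr_cop (Y m) (A, M)) (q m) B"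
        unfolding T_def by (rule K1[OF hY qm])
      also have "(\<lambda>M. hr_cop (Y m) (A, M)) = (\<lambda>M. (Y m A * e1 M + e1 A * Y m M) + (\<Sum>l\<in>{m<..k}. Y l A * X l m M))"
        using m by (intro ext) (simp add: cY)
      also have "top \<dots> (q m) B = (Y m A * top e1 (q m) B + e1 A * top (Y m) (q m) B)
          + (\<Sum>l\<in>{m<..k}. Y l A * top (X l m) (q m) B)"
        using hY hX hr_elem_e1 prim_elem[OF qm]
        by (simp add: top_add_left top_smult_left top_lin_left hr_elem_add hr_elem_smult hr_elem_lin)
      also have "top e1 (q m) = q m" by (rule top_e1[OF prim_elem[OF qm] prim_empty[OF qm]])
      finally show ?thesis by (simp add: T_def e1_def)
    qed
    have "hr_cop P (A, B) = hr_cop (Y j) (A, B) - (\<Sum>m\<in>{j<..k}. hr_cop (T m) (A, B))"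
      unfolding P_def T_def[symmetric] by (rule hr_cop_diff_sum[OF hY]) (use hT in auto)
    also have "hr_cop (Y j) (A, B) = Y j A * e1 B + e1 A * Y j B
        + (\<Sum>l\<in>{j<..k}. Y l A * q l B) + (\<Sum>l\<in>{j<..k}. \<Sum>m\<in>{j<..<l}. Y l A * top (X l m) (q m) B)"
    proof -
      have "(\<Sum>l\<in>{j<..k}. Y l A * X l j B) = (\<Sum>l\<in>{j<..k}. Y l A * q l B + (\<Sum>m\<in>{j<..<l}. Y l A * top (X l m) (q m) B))"
        by (rule sum.cong[OF refl]) (simp add: rX distrib_left sum_distrib_left)
      then show ?thesis by (simp add: cY[OF order_refl jk] add.assoc sum.distrib)
    qed
    also have "(\<Sum>m\<in>{j<..k}. hr_cop (T m) (A, B)) = e1 B * (\<Sum>m\<in>{j<..k}. T m A) + (\<Sum>m\<in>{j<..k}. Y m A * q m B)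
        + e1 A * (\<Sum>m\<in>{j<..k}. T m B) + (\<Sum>m\<in>{j<..k}. \<Sum>l\<in>{m<..k}. Y l A * top (X l m) (q m) B)"
      by (simp add: copT sum.distrib sum_distrib_left)
    also have "(\<Sum>m\<in>{j<..k}. \<Sum>l\<in>{m<..k}. Y l A * top (X l m) (q m) B) = (\<Sum>l\<in>{j<..k}. \<Sum>m\<in>{j<..<l}. Y l A * top (X l m) (q m) B)"
      by (rule tri_sum)
    finally have "hr_cop P (A, B) = e1 B * P A + e1 A * P B"
      by (simp add: P_def T_def algebra_simps)
    then show ?thesis by (simp add: e1_def)
  qed
  then show ?thesis using hP unfolding primitive_def P_def by auto
qed



section \<open>Decompositions\<close>

lemma all_less_Suc_split: "(\<forall>r<Suc n. P r) \<longleftrightarrow> P 0 \<and> (\<forall>r<n. P (Suc r))"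
  by (auto simp: less_Suc_eq_0_disj)

lemma all_Suc_less_split: "(\<forall>r. Suc r < Suc n \<longrightarrow> P r) \<longleftrightarrow> (n > 0 \<longrightarrow> P 0) \<and> (\<forall>r. Suc r < n \<longrightarrow> P (Suc r))"
proof -
  have "(\<forall>r. Suc r < Suc n \<longrightarrow> P r) \<longleftrightarrow> (\<forall>r<n. P r)" by simp
  also have "\<dots> \<longleftrightarrow> (n > 0 \<longrightarrow> P 0) \<and> (\<forall>r. Suc r < n \<longrightarrow> P (Suc r))"
  proof
    assume "\<forall>r<n. P r" then show "(n > 0 \<longrightarrow> P 0) \<and> (\<forall>r. Suc r < n \<longrightarrow> P (Suc r))" by auto
  next
    assume a: "(n > 0 \<longrightarrow> P 0) \<and> (\<forall>r. Suc r < n \<longrightarrow> P (Suc r))"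
    show "\<forall>r<n. P r"
    proof (intro allI impI)
      fix r assume "r < n" then show "P r" using a by (cases r) auto
    qed
  qed
  finally show ?thesis .
qed

lemma decomps_Cons:
  "(x # ds) \<in> decomps a i \<longleftrightarrow> fst x = a \<and> fst x \<le> snd x \<and>
     (if ds = [] then snd x = i else ds \<in> decomps (Suc (snd x)) i)"
proof (cases "ds = []")
  case True then show ?thesis by (auto simp: decomps_def)
next
  case False
  then have "length ds > 0" by simp
  have "(x # ds) \<in> decomps a i \<longleftrightarrow> fst x = a \<and> snd (last ds) = i \<and>
      fst x \<le> snd x \<and> (\<forall>r<length ds. fst (ds ! r) \<le> snd (ds ! r)) \<and>
      fst (ds ! 0) = Suc (snd x) \<and> (\<forall>r. Suc r < length ds \<longrightarrow> fst (ds ! Suc r) = Suc (snd (ds ! r)))"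
    unfolding decomps_def using False
    by (simp only: mem_Collect_eq list.sel last.simps if_False length_Cons all_less_Suc_split all_Suc_less_split
        nth_Cons_0 nth_Cons_Suc \<open>length ds > 0\<close> simp_thms list.simps) blast
  also have "\<dots> \<longleftrightarrow> fst x = a \<and> fst x \<le> snd x \<and> ds \<in> decomps (Suc (snd x)) i"
    unfolding decomps_def using False by (auto simp: hd_conv_nth)
  finally show ?thesis using False by simp
qed

lemma decomps_le: "ds \<in> decomps a i \<Longrightarrow> a \<le> i"
proof (induction ds arbitrary: a)
  case Nil then show ?case by (simp add: decomps_def)
next
  case (Cons x ds)
  then show ?case
    by (auto simp: decomps_Cons split: if_splits) (meson Cons.IH Suc_leD le_trans)
qed

lemma decomps_rec:
  assumes "a \<le> i"
  shows "decomps a i = insert [(a, i)] (\<Union>m\<in>{a..<i}. (\<lambda>ds. (a, m) # ds) ` decomps (Suc m) i)"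
proof (intro set_eqI iffI)
  fix ds assume ds: "ds \<in> decomps a i"
  then obtain x ds' where x: "ds = x # ds'" by (cases ds) (auto simp: decomps_def)
  obtain m where m: "x = (a, m)" using ds x by (cases x) (auto simp: decomps_Cons)
  show "ds \<in> insert [(a, i)] (\<Union>m\<in>{a..<i}. (\<lambda>ds. (a, m) # ds) ` decomps (Suc m) i)"
  proof (cases "ds' = []")
    case True then show ?thesis using ds x m by (simp add: decomps_Cons)
  next
    case False
    then have d': "ds' \<in> decomps (Suc m) i" and am: "a \<le> m" using ds x m by (auto simp: decomps_Cons)
    from d' have "Suc m \<le> i" by (rule decomps_le)
    then show ?thesis using d' am x m by auto
  qed
next
  fix ds assume "ds \<in> insert [(a, i)] (\<Union>m\<in>{a..<i}. (\<lambda>ds. (a, m) # ds) ` decomps (Suc m) i)"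
  then show "ds \<in> decomps a i"
  proof
    assume "ds = [(a, i)]" then show ?thesis using assms by (simp add: decomps_Cons)
  next
    assume "ds \<in> (\<Union>m\<in>{a..<i}. (\<lambda>ds. (a, m) # ds) ` decomps (Suc m) i)"
    then obtain m ds' where "m \<in> {a..<i}" "ds' \<in> decomps (Suc m) i" "ds = (a, m) # ds'" by auto
    moreover then have "ds' \<noteq> []" by (auto simp: decomps_def)
    ultimately show ?thesis by (simp add: decomps_Cons)
  qed
qed

lemma decomps_empty: "i < a \<Longrightarrow> decomps a i = {}"
  using decomps_le by force

lemma finite_decomps: "finite (decomps a i)"
proof (induction "Suc i - a" arbitrary: a rule: less_induct)
  case less
  show ?case
  proof (cases "a \<le> i")
    case True
    have "finite ((\<lambda>ds. (a, m) # ds) ` decomps (Suc m) i)" if "m \<in> {a..<i}" for m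
      using that by (intro finite_imageI less) auto
    then show ?thesis by (simp add: decomps_rec[OF True])
  next
    case False then show ?thesis by (simp add: decomps_empty)
  qed
qed

lemma decomps_nonempty: "ds \<in> decomps a i \<Longrightarrow> ds \<noteq> []"
  by (simp add: decomps_def)

lemma top_word_single[simp]: "top_word p [(a, b)] = p a b"
  by (simp add: top_word_def)

lemma top_word_Cons: "ds \<noteq> [] \<Longrightarrow> top_word p ((a, b) # ds) = top (top_word p ds) (p a b)"
proof -
  assume "ds \<noteq> []"
  then obtain c d rest where r: "rev ds = (c, d) # rest" by (cases "rev ds") auto
  then show ?thesis by (simp add: top_word_def r)
qed

lemma hr_elem_foldl:
  assumes "\<And>a b. hr_elem (p a b)"
  shows "hr_elem acc \<Longrightarrow> hr_elem (foldl (\<lambda>acc (c, d). top acc (p c d)) acc rest)"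
proof (induction rest arbitrary: acc)
  case Nil then show ?case by simp
next
  case (Cons x rest)
  then show ?case using assms by (cases x) (simp add: hr_elem_top)
qed

lemma hr_elem_top_word:
  assumes hp: "\<And>a b. hr_elem (p a b)"
  shows "hr_elem (top_word p ds)"
proof (cases "rev ds")
  case Nil then show ?thesis by (simp add: top_word_def hr_elem_def)
next
  case (Cons x rest)
  obtain a b where x: "x = (a, b)" by (cases x)
  have "top_word p ds = foldl (\<lambda>acc (c, d). top acc (p c d)) (p a b) rest"
    by (simp add: top_word_def Cons x)
  moreover have "hr_elem (foldl (\<lambda>acc (c, d). top acc (p c d)) (p a b) rest)"
    by (rule hr_elem_foldl[of p, OF hp hp])
  ultimately show ?thesis by simp
qed

lemma hr_elem_Cp:
  assumes "\<And>a b. hr_elem (p a b)"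
  shows "hr_elem (Cp_coeff p i j)"
  unfolding Cp_coeff_def
  by (rule hr_elem_sum[OF finite_decomps]) (rule hr_elem_top_word[OF assms])

lemma Cp_rec:
  assumes hp: "\<And>a b. hr_elem (p a b)" and ji: "j < i"
  shows "Cp_coeff p i j = (\<lambda>F. p (Suc j) i F + (\<Sum>m\<in>{Suc j..<i}. top (Cp_coeff p i m) (p (Suc j) m) F))"
proof
  fix F
  have le: "Suc j \<le> i" using ji by simp
  have disj: "[(Suc j, i)] \<notin> (\<Union>m\<in>{Suc j..<i}. (\<lambda>ds. (Suc j, m) # ds) ` decomps (Suc m) i)"
    by (auto dest: decomps_nonempty)
  have "Cp_coeff p i j F = top_word p [(Suc j, i)] F +
      (\<Sum>ds\<in>(\<Union>m\<in>{Suc j..<i}. (\<lambda>ds. (Suc j, m) # ds) ` decomps (Suc m) i). top_word p ds F)"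
    unfolding Cp_coeff_def decomps_rec[OF le]
    by (rule sum.insert[OF _ disj]) (auto intro: finite_decomps)
  also have "(\<Sum>ds\<in>(\<Union>m\<in>{Suc j..<i}. (\<lambda>ds. (Suc j, m) # ds) ` decomps (Suc m) i). top_word p ds F)
      = (\<Sum>m\<in>{Suc j..<i}. \<Sum>ds\<in>(\<lambda>ds. (Suc j, m) # ds) ` decomps (Suc m) i. top_word p ds F)"
    by (rule sum.UNION_disjoint) (auto intro: finite_decomps)
  also have "\<dots> = (\<Sum>m\<in>{Suc j..<i}. \<Sum>ds\<in>decomps (Suc m) i. top (top_word p ds) (p (Suc j) m) F)"
    by (rule sum.cong[OF refl], subst sum.reindex, simp add: inj_on_def, rule sum.cong[OF refl],
        simp add: top_word_Cons decomps_nonempty)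
  also have "\<dots> = (\<Sum>m\<in>{Suc j..<i}. top (Cp_coeff p i m) (p (Suc j) m) F)"
    unfolding Cp_coeff_def
    by (rule sum.cong[OF refl], rule top_sum_left[symmetric]) (auto intro: finite_decomps hr_elem_top_word hp)
  finally show "Cp_coeff p i j F = p (Suc j) i F + (\<Sum>m\<in>{Suc j..<i}. top (Cp_coeff p i m) (p (Suc j) m) F)"
    by simp
qed

lemma Cp_zero: "i \<le> j \<Longrightarrow> Cp_coeff p i j = (\<lambda>_. 0)"
  by (simp add: Cp_coeff_def decomps_empty)

lemma Cp_cong:
  assumes hp: "\<And>a b. hr_elem (p a b)" and hp': "\<And>a b. hr_elem (p' a b)"
    and eq: "\<And>a b. b \<le> i \<Longrightarrow> p a b = p' a b"
  shows "Cp_coeff p i j = Cp_coeff p' i j"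
proof (induction "i - j" arbitrary: j rule: less_induct)
  case less
  show ?case
  proof (cases "j < i")
    case True
    have "Cp_coeff p i m = Cp_coeff p' i m" if "m \<in> {Suc j..<i}" for m
      using that by (intro less) auto
    then show ?thesis using True
      by (simp add: Cp_rec[OF hp True] Cp_rec[OF hp' True] eq)
  next
    case False then show ?thesis by (simp add: Cp_zero)
  qed
qed



locale hcomod = finite_dimensional_vector_space sc Basis
  for sc :: "rat \<Rightarrow> 'v::ab_group_add \<Rightarrow> 'v" and Basis :: "'v set" +
  fixes delta :: "'v \<Rightarrow> forest \<Rightarrow> 'v"
  assumes comod: "left_comodule sc delta"
begin

lemma d_fin: "finite {F. delta v F \<noteq> 0}" using comod by (simp add: left_comodule_def)
lemma d_add: "delta (v + w) F = delta v F + delta w F"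
  using comod unfolding left_comodule_def by metis
lemma d_scale: "delta (sc c v) F = sc c (delta v F)"
  using comod unfolding left_comodule_def by metis
lemma d_counit: "delta v {#} = v" using comod by (simp add: left_comodule_def)
lemma d_coassoc: "(\<Sum>F\<in>{F. delta v F \<noteq> 0}. sc (of_nat (count (cop_forest F) (A, B))) (delta v F)) = delta (delta v A) B"
  using comod unfolding left_comodule_def by metis

lemma d_zero: "delta 0 F = 0"
  using d_add[of 0 0 F] by simp

lemma d_sum: "delta (\<Sum>i\<in>I. f i) F = (\<Sum>i\<in>I. delta (f i) F)"
proof (cases "finite I")
  case True then show ?thesis by (induction I rule: finite_induct) (simp_all add: d_zero d_add)
next
  case False then show ?thesis by (simp add: d_zero)
qed

lemma d_lin: "delta (\<Sum>i\<in>I. sc (c i) (b i)) F = (\<Sum>i\<in>I. sc (c i) (delta (b i) F))"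
  by (simp add: d_sum d_scale)

lemma sum_sc_left: "(\<Sum>i\<in>I. sc (f i) v) = sc (\<Sum>i\<in>I. f i) v"
proof (cases "finite I")
  case True then show ?thesis by (induction I rule: finite_induct) (simp_all add: scale_left_distrib)
next
  case False then show ?thesis by simp
qed

lemma indep_coeff:
  assumes inj: "inj_on b I" and fI: "finite I" and ind: "independent (b ` I)"
    and eq: "(\<Sum>j\<in>I. sc (c j) (b j)) = 0" and j: "j \<in> I"
  shows "c j = 0"
proof -
  define u where "u v = c (the_inv_into I b v)" for v
  have "(\<Sum>v\<in>b ` I. sc (u v) v) = (\<Sum>j\<in>I. sc (u (b j)) (b j))"
    by (rule sum.reindex[OF inj, unfolded comp_def])
  also have "\<dots> = (\<Sum>j\<in>I. sc (c j) (b j))"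
    by (rule sum.cong[OF refl]) (simp add: u_def the_inv_into_f_f[OF inj])
  finally have "(\<Sum>v\<in>b ` I. sc (u v) v) = 0" using eq by simp
  then have "u (b j) = 0" using ind fI j by (intro independentD[of "b ` I" "b ` I" u]) auto
  then show ?thesis by (simp add: u_def the_inv_into_f_f[OF inj j])
qed

lemma indep_coeff_eq:
  assumes inj: "inj_on b I" and fI: "finite I" and ind: "independent (b ` I)"
    and eq: "(\<Sum>j\<in>I. sc (c j) (b j)) = (\<Sum>j\<in>I. sc (c' j) (b j))" and j: "j \<in> I"
  shows "c j = c' j"
proof -
  have "(\<Sum>j\<in>I. sc (c j - c' j) (b j)) = 0"
    using eq by (simp add: scale_left_diff_distrib sum_subtractf)
  then have "c j - c' j = 0" by (rule indep_coeff[OF inj fI ind, of "\<lambda>j. c j - c' j"]) (rule j)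
  then show ?thesis by simp
qed

lemma span_coords:
  assumes inj: "inj_on b I" and fI: "finite I" and u: "u \<in> span (b ` I)"
  shows "\<exists>c. u = (\<Sum>j\<in>I. sc (c j) (b j))"
proof -
  obtain w where "u = (\<Sum>v\<in>b ` I. sc (w v) v)"
    using u span_finite[of "b ` I"] fI by auto
  also have "\<dots> = (\<Sum>j\<in>I. sc (w (b j)) (b j))"
    by (rule sum.reindex[OF inj, unfolded comp_def])
  finally show ?thesis by (intro exI[of _ "\<lambda>j. w (b j)"])
qed

definition Fs :: "forest set" where "Fs = (\<Union>\<beta>\<in>Basis. {F. delta \<beta> F \<noteq> 0})"

lemma finite_Fs: "finite Fs"
  unfolding Fs_def using finite_Basis d_fin by auto

lemma zero_out: "F \<notin> Fs \<Longrightarrow> delta v F = 0"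
proof -
  assume F: "F \<notin> Fs"
  have "v \<in> span Basis" by (simp add: span_Basis)
  then obtain u where "v = (\<Sum>\<beta>\<in>Basis. sc (u \<beta>) \<beta>)" using span_finite[OF finite_Basis] by auto
  then have "delta v F = (\<Sum>\<beta>\<in>Basis. sc (u \<beta>) (delta \<beta> F))" by (simp add: d_lin)
  also have "\<dots> = 0" using F by (intro sum.neutral) (auto simp: Fs_def)
  finally show ?thesis .
qed

lemma exist_next:
  assumes W: "span S \<noteq> UNIV"
  shows "\<exists>w. w \<notin> span S \<and> (\<forall>F. F \<noteq> {#} \<longrightarrow> delta w F \<in> span S)"
proof -
  define Good where "Good = {F \<in> Fs. F \<noteq> {#} \<and> (\<exists>v. delta v F \<notin> span S)}"
  have fG: "finite Good" using finite_Fs by (simp add: Good_def)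
  show ?thesis
  proof (cases "Good = {}")
    case True
    obtain w where w: "w \<notin> span S" using W by auto
    have "delta w F \<in> span S" if "F \<noteq> {#}" for F
    proof (cases "F \<in> Fs")
      case True then show ?thesis using \<open>Good = {}\<close> that by (auto simp: Good_def)
    next
      case False then show ?thesis by (simp add: zero_out span_zero)
    qed
    then show ?thesis using w by blast
  next
    case False
    define d where "d = Max (fweight ` Good)"
    have "d \<in> fweight ` Good" unfolding d_def using fG False by (intro Max_in) auto
    then obtain F0 where F0: "F0 \<in> Good" "fweight F0 = d" by auto
    have dmax: "fweight G \<le> d" if "G \<in> Good" for G
      using fG that by (auto simp: d_def)
    obtain v where v: "delta v F0 \<notin> span S" using F0 by (auto simp: Good_def)
    have "delta (delta v F0) B \<in> span S" if B: "B \<noteq> {#}" for B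
    proof -
      have "delta (delta v F0) B = (\<Sum>F\<in>{F. delta v F \<noteq> 0}. sc (of_nat (count (cop_forest F) (F0, B))) (delta v F))"
        by (rule d_coassoc[symmetric])
      also have "\<dots> \<in> span S"
      proof (rule span_sum)
        fix F assume "F \<in> {F. delta v F \<noteq> 0}"
        then have vF: "delta v F \<noteq> 0" by simp
        show "sc (of_nat (count (cop_forest F) (F0, B))) (delta v F) \<in> span S"
        proof (cases "count (cop_forest F) (F0, B) = 0")
          case True then show ?thesis by (simp add: span_zero)
        next
          case False
          then have "(F0, B) \<in># cop_forest F" by (simp add: count_eq_zero_iff)
          then have "fweight F0 + fweight B = fweight F" using cop_forest_grade by fastforce
          moreover have "fweight B > 0" using B fweight_zero_iff by auto
          ultimately have gt: "fweight F > d" using F0 by simp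
          have "delta v F \<in> span S"
          proof (rule ccontr)
            assume nin: "delta v F \<notin> span S"
            have "F \<in> Fs" using vF zero_out by blast
            moreover have "F \<noteq> {#}" using gt fweight_zero_iff by (metis fweight_empty not_less0)
            ultimately have "F \<in> Good" using nin by (auto simp: Good_def)
            then show False using dmax gt by fastforce
          qed
          then show ?thesis by (rule span_scale)
        qed
      qed
      finally show ?thesis .
    qed
    then show ?thesis using v by blast
  qed
qed

definition Qinv :: "nat \<Rightarrow> (nat \<Rightarrow> nat \<Rightarrow> forest \<Rightarrow> rat) \<Rightarrow> (nat \<Rightarrow> 'v) \<Rightarrow> bool" where
  "Qinv m p b \<longleftrightarrow> (\<forall>a c. hr_elem (p a c)) \<and> (\<forall>i j. 1 \<le> i \<and> i \<le> j \<and> j < m \<longrightarrow> primitive (p i j))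
     \<and> inj_on b {..<m} \<and> independent (b ` {..<m})
     \<and> (\<forall>i<m. delta (b i) = (\<lambda>F. (\<Sum>j<i. sc (Cp_coeff p i j F) (b j)) + (if F = {#} then b i else 0)))"

lemma Qinv_0: "Qinv 0 (\<lambda>_ _ _. 0) b"
  by (simp add: Qinv_def hr_elem_def independent_empty)

lemma sc_e1: "sc (e1 F) v = (if F = {#} then v else 0)"
  by (simp add: e1_def)

lemma coassoc_matrix:
  fixes J :: "nat set" and bb :: "nat \<Rightarrow> 'v" and Xf :: "nat \<Rightarrow> nat \<Rightarrow> forest \<Rightarrow> rat"
  assumes fJ: "finite J" and inj: "inj_on bb J" and ind: "independent (bb ` J)"
    and rep: "\<And>l F. l \<in> J \<Longrightarrow> delta (bb l) F = (\<Sum>j\<in>J. sc (Xf l j F) (bb j))"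
    and l0: "l0 \<in> J"
    and sup: "\<And>j. j \<in> J \<Longrightarrow> supp (Xf l0 j) \<subseteq> {F. delta (bb l0) F \<noteq> 0}"
    and j: "j \<in> J"
  shows "hr_cop (Xf l0 j) (A, B) = (\<Sum>l\<in>J. Xf l0 l A * Xf l j B)"
proof -
  define SD where "SD = {F. delta (bb l0) F \<noteq> 0}"
  have fSD: "finite SD" by (simp add: SD_def d_fin)
  define c where "c F = (of_nat (count (cop_forest F) (A, B)) :: rat)" for F
  have "(\<Sum>F\<in>SD. sc (c F) (delta (bb l0) F)) = (\<Sum>F\<in>SD. \<Sum>j\<in>J. sc (c F * Xf l0 j F) (bb j))"
    by (simp add: rep[OF l0] scale_sum_right)
  also have "\<dots> = (\<Sum>j\<in>J. sc (\<Sum>F\<in>SD. Xf l0 j F * c F) (bb j))"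
    by (subst sum.swap) (simp add: sum_sc_left mult.commute)
  also have "\<dots> = (\<Sum>j\<in>J. sc (hr_cop (Xf l0 j) (A, B)) (bb j))"
    by (rule sum.cong[OF refl]) (simp add: hr_cop_eq[OF fSD sup[unfolded SD_def[symmetric]]] c_def)
  finally have L: "(\<Sum>F\<in>SD. sc (c F) (delta (bb l0) F)) = (\<Sum>j\<in>J. sc (hr_cop (Xf l0 j) (A, B)) (bb j))" .
  have "delta (delta (bb l0) A) B = delta (\<Sum>l\<in>J. sc (Xf l0 l A) (bb l)) B" by (simp add: rep[OF l0])
  also have "\<dots> = (\<Sum>l\<in>J. sc (Xf l0 l A) (\<Sum>j\<in>J. sc (Xf l j B) (bb j)))"
    by (simp add: d_lin rep)
  also have "\<dots> = (\<Sum>j\<in>J. sc (\<Sum>l\<in>J. Xf l0 l A * Xf l j B) (bb j))"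
    by (simp add: scale_sum_right sum_sc_left[symmetric], subst sum.swap, simp)
  finally have R: "delta (delta (bb l0) A) B = (\<Sum>j\<in>J. sc (\<Sum>l\<in>J. Xf l0 l A * Xf l j B) (bb j))" .
  have "(\<Sum>j\<in>J. sc (hr_cop (Xf l0 j) (A, B)) (bb j)) = (\<Sum>j\<in>J. sc (\<Sum>l\<in>J. Xf l0 l A * Xf l j B) (bb j))"
    using L R d_coassoc[where v = "bb l0" and A = A and B = B] by (simp add: SD_def c_def)
  then show ?thesis by (rule indep_coeff_eq[OF inj fJ ind _ j])
qed

lemma step:
  assumes Q: "Qinv m p b" and md: "m < dim (UNIV :: 'v set)"
  shows "\<exists>p' b'. Qinv (Suc m) p' b'"
proof -
  define I where "I = {..<m}"
  have hp: "\<And>a c. hr_elem (p a c)" and pp: "\<And>i j. 1 \<le> i \<Longrightarrow> i \<le> j \<Longrightarrow> j < m \<Longrightarrow> primitive (p i j)"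
    and inj: "inj_on b I" and ind: "independent (b ` I)"
    and rel: "\<And>i. i < m \<Longrightarrow> delta (b i) = (\<lambda>F. (\<Sum>j<i. sc (Cp_coeff p i j F) (b j)) + (if F = {#} then b i else 0))"
    using Q by (auto simp: Qinv_def I_def)
  have fI: "finite I" by (simp add: I_def)
  have "span (b ` I) \<noteq> UNIV"
  proof
    assume "span (b ` I) = UNIV"
    then have "dim (UNIV :: 'v set) = card (b ` I)" using dim_span_eq_card_independent[OF ind] by simp
    also have "\<dots> = m" using card_image[OF inj] by (simp add: I_def)
    finally show False using md by simp
  qed
  then obtain w where w: "w \<notin> span (b ` I)" and wF: "\<And>F. F \<noteq> {#} \<Longrightarrow> delta w F \<in> span (b ` I)"
    using exist_next by blast
  have w0: "w \<noteq> 0" using w span_zero by auto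
  have wS: "w \<notin> b ` I" using w span_base by blast
  define cf where "cf F = (SOME c. delta w F = (\<Sum>j\<in>I. sc (c j) (b j)))" for F
  define Y where "Y j F = (if F = {#} \<or> m \<le> j then 0 else cf F j)" for j F
  have repW: "delta w F = (\<Sum>j\<in>I. sc (Y j F) (b j)) + (if F = {#} then w else 0)" for F
  proof (cases "F = {#}")
    case True then show ?thesis by (simp add: Y_def d_counit)
  next
    case False
    have "\<exists>c. delta w F = (\<Sum>j\<in>I. sc (c j) (b j))" by (rule span_coords[OF inj fI wF[OF False]])
    then have "delta w F = (\<Sum>j\<in>I. sc (cf F j) (b j))" unfolding cf_def by (rule someI_ex)
    also have "\<dots> = (\<Sum>j\<in>I. sc (Y j F) (b j))" by (rule sum.cong) (auto simp: Y_def False I_def)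
    finally show ?thesis using False by simp
  qed
  have suppY: "supp (Y j) \<subseteq> {F. delta w F \<noteq> 0}" for j
  proof
    fix F assume "F \<in> supp (Y j)"
    then have Yj: "Y j F \<noteq> 0" by (simp add: supp_def)
    then have F: "F \<noteq> {#}" and jI: "j \<in> I" by (auto simp: Y_def I_def split: if_splits)
    show "F \<in> {F. delta w F \<noteq> 0}"
    proof (rule ccontr)
      assume "F \<notin> {F. delta w F \<noteq> 0}"
      then have "(\<Sum>j\<in>I. sc (Y j F) (b j)) = 0" using repW[of F] F by simp
      then have "Y j F = 0" by (rule indep_coeff[OF inj fI ind _ jI])
      then show False using Yj by simp
    qed
  qed
  have hY: "hr_elem (Y j)" for j
    unfolding hr_elem_supp by (rule finite_subset[OF suppY d_fin])
  define J where "J = {..m}"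
  define b' where "b' = b(m := w)"
  have b'I: "b' j = b j" if "j < m" for j using that by (simp add: b'_def)
  have fJ: "finite J" by (simp add: J_def)
  have JI: "J = insert m I" by (auto simp: J_def I_def)
  have b'J: "b' ` J = insert w (b ` I)"
    by (auto simp: JI b'_def I_def image_def)
  have injJ: "inj_on b' J"
    unfolding JI using inj wS by (auto simp: inj_on_def b'_def I_def image_def)
  have indJ: "independent (b' ` J)" unfolding b'J by (rule independent_insertI[OF w ind])
  define Xf where "Xf l j F = (if l = m then (if j < m then Y j F else if j = m then e1 F else 0)
      else (if j < l then Cp_coeff p l j F else if j = l then e1 F else 0))" for l j F
  have repJ: "delta (b' l) F = (\<Sum>j\<in>J. sc (Xf l j F) (b' j))" if l: "l \<in> J" for l F
  proof (cases "l = m")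
    case True
    have "(\<Sum>j\<in>J. sc (Xf l j F) (b' j)) = sc (Xf l m F) (b' m) + (\<Sum>j\<in>I. sc (Xf l j F) (b' j))"
      unfolding JI by (rule sum.insert) (auto simp: I_def fI)
    also have "\<dots> = (if F = {#} then w else 0) + (\<Sum>j\<in>I. sc (Y j F) (b j))"
      using True by (simp add: Xf_def sc_e1 b'_def I_def)
    finally show ?thesis using True repW[of F] by (simp add: b'_def add.commute)
  next
    case False
    then have lm: "l < m" using l by (simp add: J_def)
    have "(\<Sum>j\<in>J. sc (Xf l j F) (b' j)) = (\<Sum>j\<in>J. (if j < l then sc (Cp_coeff p l j F) (b j) else 0)
        + (if j = l then (if F = {#} then b l else 0) else 0))"
      by (rule sum.cong[OF refl]) (use lm in \<open>auto simp: Xf_def sc_e1 b'_def\<close>)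
    also have "\<dots> = (\<Sum>j\<in>{j \<in> J. j < l}. sc (Cp_coeff p l j F) (b j)) + (if F = {#} then b l else 0)"
      using l fJ by (simp add: sum.distrib sum.inter_filter)
    also have "{j \<in> J. j < l} = {..<l}" using lm by (auto simp: J_def)
    finally show ?thesis using rel[OF lm] False by (simp add: b'_def)
  qed
  have mJ: "m \<in> J" by (simp add: J_def)
  have supJ: "supp (Xf m j) \<subseteq> {F. delta (b' m) F \<noteq> 0}" if "j \<in> J" for j
  proof (cases "j < m")
    case True then show ?thesis using suppY[of j] by (simp add: Xf_def b'_def supp_def)
  next
    case False
    then have "j = m" using that by (simp add: J_def)
    then show ?thesis using w0 by (auto simp: Xf_def b'_def supp_def e1_def d_counit)
  qed
  have cY: "hr_cop (Y j) (A, B) = Y j A * e1 B + e1 A * Y j B + (\<Sum>l\<in>{j<..<m}. Y l A * Cp_coeff p l j B)"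
    if jm: "j < m" for j A B
  proof -
    have jJ: "j \<in> J" using jm by (simp add: J_def)
    have "hr_cop (Xf m j) (A, B) = (\<Sum>l\<in>J. Xf m l A * Xf l j B)"
      by (rule coassoc_matrix[OF fJ injJ indJ repJ mJ supJ jJ])
    also have "\<dots> = (\<Sum>l\<in>J. (if l = j then Y j A * e1 B else 0) + (if l = m then e1 A * Y j B else 0)
        + (if j < l \<and> l < m then Y l A * Cp_coeff p l j B else 0))"
      by (rule sum.cong[OF refl]) (use jm in \<open>auto simp: Xf_def J_def\<close>)
    also have "\<dots> = Y j A * e1 B + e1 A * Y j B + (\<Sum>l\<in>{l \<in> J. j < l \<and> l < m}. Y l A * Cp_coeff p l j B)"
      using jJ mJ fJ by (simp add: sum.distrib sum.inter_filter)
    also have "{l \<in> J. j < l \<and> l < m} = {j<..<m}" by (auto simp: J_def)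
    finally show ?thesis using jm by (simp add: Xf_def)
  qed
  define newp where "newp a = (\<lambda>F. Y (a - 1) F - (\<Sum>m'\<in>{a - 1<..m - 1}. top (Y m') (p a m') F))" for a
  define p' where "p' a c = (if c = m \<and> 1 \<le> a \<and> a \<le> m then newp a else p a c)" for a c
  have hnewp: "hr_elem (newp a)" for a
    unfolding newp_def using hY hp by (intro hr_elem_diff_sum) (auto intro: hr_elem_top)
  have hp': "hr_elem (p' a c)" for a c by (simp add: p'_def hnewp hp)
  have prim_new: "primitive (newp a)" if a: "1 \<le> a" "a \<le> m" for a
  proof -
    define j where "j = a - 1"
    have aj: "a = Suc j" using a by (simp add: j_def)
    have "primitive (\<lambda>F. Y j F - (\<Sum>m'\<in>{j<..m - 1}. top (Y m') (p (Suc j) m') F))"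
    proof (rule prim_step[where X = "Cp_coeff p"])
      show "hr_elem (Y l)" for l by (rule hY)
      show "hr_elem (Cp_coeff p l m')" for l m' by (rule hr_elem_Cp[OF hp])
      show "primitive (p (Suc j) m')" if "j < m'" "m' \<le> m - 1" for m'
        using that a by (intro pp) (auto simp: j_def)
      show "hr_cop (Y m') (A, B) = Y m' A * e1 B + e1 A * Y m' B + (\<Sum>l\<in>{m'<..m - 1}. Y l A * Cp_coeff p l m' B)"
        if "j \<le> m'" "m' \<le> m - 1" for m' A B
      proof -
        have "m' < m" using that a by (simp add: j_def)
        moreover have "{m'<..m - 1} = {m'<..<m}" using \<open>m' < m\<close> by auto
        ultimately show ?thesis by (simp add: cY)
      qed
      show "Cp_coeff p l j = (\<lambda>F. p (Suc j) l F + (\<Sum>m'\<in>{j<..<l}. top (Cp_coeff p l m') (p (Suc j) m') F))"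
        if "j < l" "l \<le> m - 1" for l
      proof -
        have "{Suc j..<l} = {j<..<l}" by auto
        then show ?thesis using Cp_rec[OF hp that(1)] by simp
      qed
      show "j \<le> m - 1" using a by (simp add: j_def)
    qed
    then show ?thesis using aj by (simp add: newp_def)
  qed
  have Cp_old: "Cp_coeff p' i j = Cp_coeff p i j" if "i < m" for i j
    by (rule Cp_cong[OF hp' hp]) (use that in \<open>auto simp: p'_def\<close>)
  have Cp_new: "Cp_coeff p' m j = Y j" if "j < m" for j
    using that
  proof (induction "m - j" arbitrary: j rule: less_induct)
    case less
    have IH: "Cp_coeff p' m m' = Y m'" if "m' \<in> {Suc j..<m}" for m'
      using that by (intro less) auto
    have "Cp_coeff p' m j = (\<lambda>F. p' (Suc j) m F + (\<Sum>m'\<in>{Suc j..<m}. top (Cp_coeff p' m m') (p' (Suc j) m') F))"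
      by (rule Cp_rec[OF hp' less.prems])
    also have "\<dots> = (\<lambda>F. newp (Suc j) F + (\<Sum>m'\<in>{Suc j..<m}. top (Y m') (p (Suc j) m') F))"
    proof (rule ext)
      fix F
      have 1: "p' (Suc j) m = newp (Suc j)" using less.prems by (simp add: p'_def)
      have 2: "(\<Sum>m'\<in>{Suc j..<m}. top (Cp_coeff p' m m') (p' (Suc j) m') F) = (\<Sum>m'\<in>{Suc j..<m}. top (Y m') (p (Suc j) m') F)"
      proof (rule sum.cong[OF refl])
        fix m' assume m': "m' \<in> {Suc j..<m}"
        then have "p' (Suc j) m' = p (Suc j) m'" by (simp add: p'_def)
        then show "top (Cp_coeff p' m m') (p' (Suc j) m') F = top (Y m') (p (Suc j) m') F" using IH[OF m'] by simp
      qed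
      show "p' (Suc j) m F + (\<Sum>m'\<in>{Suc j..<m}. top (Cp_coeff p' m m') (p' (Suc j) m') F)
          = newp (Suc j) F + (\<Sum>m'\<in>{Suc j..<m}. top (Y m') (p (Suc j) m') F)"
        by (simp only: 1 2)
    qed
    also have "\<dots> = Y j"
    proof -
      have "{Suc j - 1<..m - 1} = {Suc j..<m}" using less.prems by auto
      then show ?thesis by (simp add: newp_def)
    qed
    finally show ?case .
  qed
  have "Qinv (Suc m) p' b'"
    unfolding Qinv_def
  proof (intro conjI allI impI)
    show "hr_elem (p' a c)" for a c by (rule hp')
    show "primitive (p' i j)" if "1 \<le> i \<and> i \<le> j \<and> j < Suc m" for i j
    proof (cases "j = m")
      case True then show ?thesis using that prim_new by (simp add: p'_def)
    next
      case False then show ?thesis using that pp by (simp add: p'_def)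
    qed
    have eqJ: "{..<Suc m} = J" by (auto simp: J_def)
    show "inj_on b' {..<Suc m}" using injJ eqJ by simp
    show "independent (b' ` {..<Suc m})" using indJ eqJ by simp
    show "delta (b' i) = (\<lambda>F. (\<Sum>j<i. sc (Cp_coeff p' i j F) (b' j)) + (if F = {#} then b' i else 0))"
      if "i < Suc m" for i
    proof (cases "i = m")
      case True
      show ?thesis
      proof
        fix F
        have "(\<Sum>j<i. sc (Cp_coeff p' i j F) (b' j)) = (\<Sum>j\<in>I. sc (Y j F) (b j))"
          using True by (intro sum.cong) (auto simp: I_def Cp_new b'_def)
        then show "delta (b' i) F = (\<Sum>j<i. sc (Cp_coeff p' i j F) (b' j)) + (if F = {#} then b' i else 0)"
          using True repW[of F] by (simp add: b'_def)
      qed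
    next
      case False
      then have im: "i < m" using that by simp
      show ?thesis
      proof
        fix F
        have "(\<Sum>j<i. sc (Cp_coeff p' i j F) (b' j)) = (\<Sum>j<i. sc (Cp_coeff p i j F) (b j))"
          using im by (intro sum.cong) (auto simp: Cp_old b'_def)
        then show "delta (b' i) F = (\<Sum>j<i. sc (Cp_coeff p' i j F) (b' j)) + (if F = {#} then b' i else 0)"
          using rel[OF im] im by (simp add: b'_def)
      qed
    qed
  qed
  then show ?thesis by (intro exI)
qed

lemma all_Q: "m \<le> dim (UNIV :: 'v set) \<Longrightarrow> \<exists>p b. Qinv m p b"
proof (induction m)
  case 0 then show ?case using Qinv_0 by blast
next
  case (Suc m)
  then obtain p b where "Qinv m p b" by auto
  then show ?case using step Suc.prems by auto
qed

lemma Qinv_span: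
  assumes Q: "Qinv m p b" and md: "m = dim (UNIV :: 'v set)"
  shows "span (b ` {..<m}) = UNIV"
proof -
  have inj: "inj_on b {..<m}" and ind: "independent (b ` {..<m})" using Q by (auto simp: Qinv_def)
  have "card (b ` {..<m}) = m" using card_image[OF inj] by simp
  then have "UNIV \<subseteq> span (b ` {..<m})" using md by (intro card_ge_dim_independent[OF _ ind]) auto
  then show ?thesis by auto
qed

end

theorem theorem5p3:
  fixes sc :: "rat \<Rightarrow> 'v::ab_group_add \<Rightarrow> 'v"
    and delta :: "'v \<Rightarrow> forest \<Rightarrow> 'v"
  assumes comod: "left_comodule sc delta"
    and findim: "\<exists>B. finite B \<and> \<not> module.dependent sc B
                   \<and> module.span sc B = UNIV"
  shows "(vector_space.dim sc UNIV = 1 \<longrightarrow> (\<forall>x. delta x = (\<lambda>F. if F = {#} then x else 0)))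
       \<and> (\<forall>n\<ge>1. vector_space.dim sc UNIV = n + 1 \<longrightarrow>
           (\<exists>p :: nat \<Rightarrow> nat \<Rightarrow> forest \<Rightarrow> rat.
              (\<forall>i j. 1 \<le> i \<and> i \<le> j \<and> j \<le> n \<longrightarrow> primitive (p i j)) \<and>
              (\<exists>b :: nat \<Rightarrow> 'v.
                 inj_on b {0..n} \<and>
                 \<not> module.dependent sc (b ` {0..n}) \<and>
                 module.span sc (b ` {0..n}) = UNIV \<and>
                 (\<forall>i\<le>n. delta (b i) =
                    (\<lambda>F. (\<Sum>j<i. sc (Cp_coeff p i j F) (b j)) + (if F = {#} then b i else 0))))))"
proof -
  obtain B where B: "finite B" "\<not> module.dependent sc B" "module.span sc B = UNIV" using findim by blast
  have vs: "vector_space sc" using comod by (simp add: left_comodule_def)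
  interpret H: hcomod sc B delta
    unfolding hcomod_def hcomod_axioms_def finite_dimensional_vector_space_def
      finite_dimensional_vector_space_axioms_def
    using vs B comod by auto
  have P1: "\<forall>x. delta x = (\<lambda>F. if F = {#} then x else 0)" if d1: "H.dim (UNIV :: 'v set) = 1"
  proof
    fix x
    obtain p b where Q: "H.Qinv 1 p b" using H.all_Q[of 1] d1 by auto
    have sp: "H.span (b ` {..<1}) = UNIV" by (rule H.Qinv_span[OF Q d1[symmetric]])
    have b0: "delta (b 0) = (\<lambda>F. if F = {#} then b 0 else 0)" using Q by (auto simp: H.Qinv_def)
    have "x \<in> H.span {b 0}" using sp by (simp add: lessThan_Suc)
    then obtain c where "x = sc c (b 0)" by (auto simp: H.span_singleton)
    then show "delta x = (\<lambda>F. if F = {#} then x else 0)"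
      by (intro ext) (simp add: H.d_scale b0)
  qed
  have P2: "\<exists>p :: nat \<Rightarrow> nat \<Rightarrow> forest \<Rightarrow> rat.
              (\<forall>i j. 1 \<le> i \<and> i \<le> j \<and> j \<le> n \<longrightarrow> primitive (p i j)) \<and>
              (\<exists>b :: nat \<Rightarrow> 'v.
                 inj_on b {0..n} \<and>
                 \<not> module.dependent sc (b ` {0..n}) \<and>
                 module.span sc (b ` {0..n}) = UNIV \<and>
                 (\<forall>i\<le>n. delta (b i) =
                    (\<lambda>F. (\<Sum>j<i. sc (Cp_coeff p i j F) (b j)) + (if F = {#} then b i else 0))))"
    if dn: "H.dim (UNIV :: 'v set) = n + 1" for n
  proof -
    obtain p b where Q: "H.Qinv (n + 1) p b" using H.all_Q[of "n + 1"] dn by auto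
    have eq: "{0..n} = {..<n + 1}" by auto
    have sp: "H.span (b ` {..<n + 1}) = UNIV" by (rule H.Qinv_span[OF Q dn[symmetric]])
    show ?thesis
    proof (intro exI conjI allI impI)
      show "primitive (p i j)" if "1 \<le> i \<and> i \<le> j \<and> j \<le> n" for i j
        using Q that by (auto simp: H.Qinv_def)
      show "inj_on b {0..n}" using Q by (simp add: H.Qinv_def eq)
      show "\<not> module.dependent sc (b ` {0..n})" using Q by (simp add: H.Qinv_def eq)
      show "module.span sc (b ` {0..n}) = UNIV" using sp by (simp add: eq)
      show "delta (b i) = (\<lambda>F. (\<Sum>j<i. sc (Cp_coeff p i j F) (b j)) + (if F = {#} then b i else 0))"
        if "i \<le> n" for i
        using Q that by (simp add: H.Qinv_def)
    qed
  qed
  show ?thesis using P1 P2 by blast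
qed


end
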